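(* For every choice of $s,i,k=1,\dots,n$, the contravariant Christoffel symbol $\Gamma^{si}_k(u)$ of $g$, regarded as a homogeneous polynomial in the $p$-variables via $u_m=\sum_{1\le i_1<\dots<i_m\le n}p_{i_1}^2\cdots p_{i_m}^2$, satisfies $\deg\big(\Gamma^{si}_k(u)\big)<4n-4$.
   Context: $n\ge2$. $g$ is the cometric $g^{ij}(p)=\frac{1-\delta^{ij}}{p_ip_j}$ on $\mathbb{C}^n$ (inverse metric $g_{ij}(p)=(\frac{1}{n-1}-\delta_{ij})p_ip_j$), invariant under $B_n$ acting by permutations and sign changes of coordinates. In the coordinates $u_1,\dots,u_n$ on the orbit space, $g^{ij}(u)=\sum_{k,l}g^{kl}(p)\frac{\partial u_i}{\partial p_k}\frac{\partial u_j}{\partial p_l}$, $\Gamma^j_{sk}(u)$ are the Christoffel symbols of the Levi-Civita connection of $g$, and $\Gamma^{si}_k(u)=-\sum_j g^{sj}(u)\Gamma^i_{jk}(u)$ (these are polynomials in $u$); degrees are in the $p$-variables, with $\deg u_m=2m$. *)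

theory Defs
  imports "HOL-Analysis.Analysis"
begin

text \<open>Points of C^n are functions p :: nat => complex, only the coordinates p 1, ..., p n matter.
  Likewise points of the orbit space are u :: nat => complex with coordinates u 1, ..., u n.\<close>

definition pd :: "((nat \<Rightarrow> complex) \<Rightarrow> complex) \<Rightarrow> (nat \<Rightarrow> complex) \<Rightarrow> nat \<Rightarrow> complex" where
  "pd F x a = deriv (\<lambda>t. F (x(a := t))) (x a)"

definition uC :: "nat \<Rightarrow> nat \<Rightarrow> (nat \<Rightarrow> complex) \<Rightarrow> complex" where
  "uC n m p = (\<Sum>S\<in>{S. S \<subseteq> {1..n} \<and> card S = m}. \<Prod>i\<in>S. (p i)^2)"

definition gP :: "nat \<Rightarrow> nat \<Rightarrow> (nat \<Rightarrow> complex) \<Rightarrow> complex" where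
  "gP k l p = (if k = l then 0 else 1 / (p k * p l))"

definition gU :: "nat \<Rightarrow> nat \<Rightarrow> nat \<Rightarrow> (nat \<Rightarrow> complex) \<Rightarrow> complex" where
  "gU n i j u = (SOME v. \<exists>p. (\<forall>k\<in>{1..n}. p k \<noteq> 0) \<and> (\<forall>m\<in>{1..n}. uC n m p = u m) \<and>
      v = (\<Sum>k=1..n. \<Sum>l=1..n. gP k l p * pd (uC n i) p k * pd (uC n j) p l))"

definition gL :: "nat \<Rightarrow> (nat \<Rightarrow> complex) \<Rightarrow> nat \<Rightarrow> nat \<Rightarrow> complex" where
  "gL n u = (SOME G. \<forall>i\<in>{1..n}. \<forall>k\<in>{1..n}.
      (\<Sum>j=1..n. gU n i j u * G j k) = (if i = k then 1 else 0))"

definition Gam :: "nat \<Rightarrow> nat \<Rightarrow> nat \<Rightarrow> nat \<Rightarrow> (nat \<Rightarrow> complex) \<Rightarrow> complex" where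
  "Gam n j s k u = (1/2) * (\<Sum>l=1..n. gU n j l u *
      (pd (\<lambda>v. gL n v l k) u s + pd (\<lambda>v. gL n v l s) u k - pd (\<lambda>v. gL n v s k) u l))"

definition GamC :: "nat \<Rightarrow> nat \<Rightarrow> nat \<Rightarrow> nat \<Rightarrow> (nat \<Rightarrow> complex) \<Rightarrow> complex" where
  "GamC n s i k u = - (\<Sum>j=1..n. gU n s j u * Gam n i j k u)"

text \<open>Generic points of C^n (free B_n-orbits): all p_i nonzero and p_i^2 pairwise distinct.\<close>
definition generic :: "nat \<Rightarrow> (nat \<Rightarrow> complex) \<Rightarrow> bool" where
  "generic n p \<longleftrightarrow> (\<forall>i\<in>{1..n}. p i \<noteq> 0) \<and>
      (\<forall>i\<in>{1..n}. \<forall>j\<in>{1..n}. i \<noteq> j \<longrightarrow> (p i)^2 \<noteq> (p j)^2)"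

definition exps_below :: "nat \<Rightarrow> nat \<Rightarrow> (nat \<Rightarrow> nat) set" where
  "exps_below n d = {\<alpha>. (\<forall>j. j \<notin> {1..n} \<longrightarrow> \<alpha> j = 0) \<and> sum \<alpha> {1..n} < d}"

end

theory Submission
  imports Defs "HOL-Complex_Analysis.Complex_Analysis" "Jordan_Normal_Form.Determinant" "HOL-Computational_Algebra.Polynomial"
begin


section \<open>Polynomials as functions\<close>

definition monoI :: "nat set \<Rightarrow> (nat \<Rightarrow> nat) \<Rightarrow> (nat \<Rightarrow> complex) \<Rightarrow> complex" where
  "monoI I \<alpha> a = (\<Prod>j\<in>I. a j ^ \<alpha> j)"

definition expo :: "nat set \<Rightarrow> nat \<Rightarrow> (nat \<Rightarrow> nat) set" where
  "expo I D = {\<alpha>. (\<forall>j. j \<notin> I \<longrightarrow> \<alpha> j = 0) \<and> sum \<alpha> I \<le> D}"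

definition Pol :: "nat set \<Rightarrow> nat \<Rightarrow> ((nat \<Rightarrow> complex) \<Rightarrow> complex) set" where
  "Pol I D = {f. \<exists>c. \<forall>a. f a = (\<Sum>\<alpha>\<in>expo I D. c \<alpha> * monoI I \<alpha> a)}"

lemma finite_expo: assumes "finite I" shows "finite (expo I D)"
proof -
  have "expo I D \<subseteq> {f. \<forall>x. (x \<in> I \<longrightarrow> f x \<in> {0..D}) \<and> (x \<notin> I \<longrightarrow> f x = 0)}"
  proof
    fix \<alpha> assume a: "\<alpha> \<in> expo I D"
    have "\<alpha> x \<le> D" if "x \<in> I" for x
    proof -
      have "\<alpha> x \<le> sum \<alpha> I" using that assms by (intro member_le_sum) auto
      thus ?thesis using a by (auto simp: expo_def)
    qed
    thus "\<alpha> \<in> {f. \<forall>x. (x \<in> I \<longrightarrow> f x \<in> {0..D}) \<and> (x \<notin> I \<longrightarrow> f x = 0)}"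
      using a by (auto simp: expo_def)
  qed
  thus ?thesis by (rule finite_subset) (intro finite_set_of_finite_funs assms, simp)
qed

lemma monoI_add: "monoI I (\<lambda>j. \<alpha> j + \<beta> j) a = monoI I \<alpha> a * monoI I \<beta> a"
  by (simp add: monoI_def power_add prod.distrib)

lemma PolI: "(\<And>a. f a = (\<Sum>\<alpha>\<in>expo I D. c \<alpha> * monoI I \<alpha> a)) \<Longrightarrow> f \<in> Pol I D"
  unfolding Pol_def by blast

lemma PolE: assumes "f \<in> Pol I D" obtains c where "\<And>a. f a = (\<Sum>\<alpha>\<in>expo I D. c \<alpha> * monoI I \<alpha> a)"
  using assms unfolding Pol_def by blast

lemma expo_mono: "D \<le> D' \<Longrightarrow> expo I D \<subseteq> expo I D'"
  by (auto simp: expo_def)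

lemma Pol_mono: assumes "finite I" "D \<le> D'" "f \<in> Pol I D" shows "f \<in> Pol I D'"
proof -
  obtain c where c: "\<And>a. f a = (\<Sum>\<alpha>\<in>expo I D. c \<alpha> * monoI I \<alpha> a)" using assms(3) unfolding Pol_def by blast
  show ?thesis
  proof (rule PolI[where c="\<lambda>\<alpha>. if \<alpha> \<in> expo I D then c \<alpha> else 0"])
    fix a
    have "(\<Sum>\<alpha>\<in>expo I D'. (if \<alpha> \<in> expo I D then c \<alpha> else 0) * monoI I \<alpha> a)
        = (\<Sum>\<alpha>\<in>expo I D. (if \<alpha> \<in> expo I D then c \<alpha> else 0) * monoI I \<alpha> a)"
      by (rule sum.mono_neutral_right) (auto simp: finite_expo assms expo_mono)
    thus "f a = (\<Sum>\<alpha>\<in>expo I D'. (if \<alpha> \<in> expo I D then c \<alpha> else 0) * monoI I \<alpha> a)"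
      by (simp add: c)
  qed
qed

lemma zero_in_expo: "(\<lambda>_. 0) \<in> expo I D" by (simp add: expo_def)

lemma Pol_const: assumes "finite I" shows "(\<lambda>a. z) \<in> Pol I D"
proof (rule PolI[where c="\<lambda>\<alpha>. if \<alpha> = (\<lambda>_. 0) then z else 0"])
  fix a :: "nat \<Rightarrow> complex"
  have "(\<Sum>\<alpha>\<in>expo I D. (if \<alpha> = (\<lambda>_. 0) then z else 0) * monoI I \<alpha> a)
      = (\<Sum>\<alpha>\<in>expo I D. if \<alpha> = (\<lambda>_. 0) then z * monoI I \<alpha> a else 0)"
    by (intro sum.cong) auto
  also have "\<dots> = (if (\<lambda>_. 0::nat) \<in> expo I D then z * monoI I (\<lambda>_. 0) a else 0)"
    by (simp add: sum.delta' finite_expo assms)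
  also have "\<dots> = z" by (simp add: zero_in_expo monoI_def)
  finally show "z = (\<Sum>\<alpha>\<in>expo I D. (if \<alpha> = (\<lambda>_. 0) then z else 0) * monoI I \<alpha> a)" ..
qed

lemma Pol_var: assumes "finite I" "j \<in> I" "1 \<le> D" shows "(\<lambda>a. a j) \<in> Pol I D"
proof -
  define e where "e = (\<lambda>x. if x = j then 1 else (0::nat))"
  have e: "e \<in> expo I D" using assms by (auto simp: e_def expo_def)
  show ?thesis
  proof (rule PolI[where c="\<lambda>\<alpha>. if \<alpha> = e then 1 else 0"])
    fix a :: "nat \<Rightarrow> complex"
    have "(\<Sum>\<alpha>\<in>expo I D. (if \<alpha> = e then 1 else 0) * monoI I \<alpha> a) = (\<Sum>\<alpha>\<in>expo I D. if \<alpha> = e then monoI I \<alpha> a else 0)"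
      by (intro sum.cong) auto
    also have "\<dots> = monoI I e a"
      by (simp add: sum.delta' finite_expo assms e)
    also have "monoI I e a = (\<Prod>x\<in>I. if x = j then a j else 1)"
      unfolding monoI_def e_def by (intro prod.cong) auto
    also have "\<dots> = a j" using assms by (simp add: prod.delta')
    finally show "a j = (\<Sum>\<alpha>\<in>expo I D. (if \<alpha> = e then 1 else 0) * monoI I \<alpha> a)" ..
  qed
qed

lemma Pol_add: assumes "finite I" "f \<in> Pol I D" "g \<in> Pol I D" shows "(\<lambda>a. f a + g a) \<in> Pol I D"
proof -
  obtain c where c: "\<And>a. f a = (\<Sum>\<alpha>\<in>expo I D. c \<alpha> * monoI I \<alpha> a)" using assms(2) unfolding Pol_def by blast
  obtain d where d: "\<And>a. g a = (\<Sum>\<alpha>\<in>expo I D. d \<alpha> * monoI I \<alpha> a)" using assms(3) unfolding Pol_def by blast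
  show ?thesis by (rule PolI[where c="\<lambda>\<alpha>. c \<alpha> + d \<alpha>"]) (simp add: c d sum.distrib distrib_right)
qed

lemma Pol_scale: assumes "f \<in> Pol I D" shows "(\<lambda>a. z * f a) \<in> Pol I D"
proof -
  obtain c where c: "\<And>a. f a = (\<Sum>\<alpha>\<in>expo I D. c \<alpha> * monoI I \<alpha> a)" using assms unfolding Pol_def by blast
  show ?thesis by (rule PolI[where c="\<lambda>\<alpha>. z * c \<alpha>"]) (simp add: c sum_distrib_left mult.assoc)
qed

lemma Pol_neg: assumes "f \<in> Pol I D" shows "(\<lambda>a. - f a) \<in> Pol I D"
  using Pol_scale[OF assms, of "-1"] by simp

lemma Pol_diff: assumes "finite I" "f \<in> Pol I D" "g \<in> Pol I D" shows "(\<lambda>a. f a - g a) \<in> Pol I D"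
  using Pol_add[OF assms(1,2) Pol_neg[OF assms(3)]] by simp

lemma Pol_mult: assumes I: "finite I" and "f \<in> Pol I D1" "g \<in> Pol I D2"
  shows "(\<lambda>a. f a * g a) \<in> Pol I (D1 + D2)"
proof -
  obtain c where c: "\<And>a. f a = (\<Sum>\<alpha>\<in>expo I D1. c \<alpha> * monoI I \<alpha> a)" using assms(2) unfolding Pol_def by blast
  obtain d where d: "\<And>a. g a = (\<Sum>\<alpha>\<in>expo I D2. d \<alpha> * monoI I \<alpha> a)" using assms(3) unfolding Pol_def by blast
  define S where "S = expo I D1 \<times> expo I D2"
  define pl where "pl = (\<lambda>x::(nat\<Rightarrow>nat)\<times>(nat\<Rightarrow>nat). (\<lambda>j. fst x j + snd x j))"
  define e where "e = (\<lambda>\<gamma>. \<Sum>x\<in>{x\<in>S. pl x = \<gamma>}. c (fst x) * d (snd x))"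
  have fS: "finite S" by (simp add: S_def finite_expo I)
  have img: "pl ` S \<subseteq> expo I (D1 + D2)"
    by (auto simp: S_def pl_def expo_def sum.distrib add_mono)
  show ?thesis
  proof (rule PolI[where c=e])
    fix a
    have "f a * g a = (\<Sum>\<alpha>\<in>expo I D1. \<Sum>\<beta>\<in>expo I D2. c \<alpha> * d \<beta> * monoI I (pl (\<alpha>,\<beta>)) a)"
      by (simp add: c d sum_distrib_left sum_distrib_right pl_def monoI_add mult_ac sum.swap[of _ "expo I D2"])
    also have "\<dots> = (\<Sum>x\<in>S. c (fst x) * d (snd x) * monoI I (pl x) a)"
      by (simp add: S_def sum.cartesian_product case_prod_beta)
    also have "\<dots> = (\<Sum>\<gamma>\<in>expo I (D1+D2). \<Sum>x\<in>{x\<in>S. pl x = \<gamma>}. c (fst x) * d (snd x) * monoI I (pl x) a)"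
      by (rule sum.group[symmetric]) (auto simp: fS finite_expo I img)
    also have "\<dots> = (\<Sum>\<gamma>\<in>expo I (D1+D2). e \<gamma> * monoI I \<gamma> a)"
      unfolding e_def sum_distrib_right by (intro sum.cong refl) auto
    finally show "f a * g a = (\<Sum>\<gamma>\<in>expo I (D1+D2). e \<gamma> * monoI I \<gamma> a)" .
  qed
qed

lemma Pol_sum: assumes "finite I" "finite S" "\<And>x. x \<in> S \<Longrightarrow> f x \<in> Pol I D"
  shows "(\<lambda>a. \<Sum>x\<in>S. f x a) \<in> Pol I D"
  using assms(2,3)
proof (induction S rule: finite_induct)
  case empty thus ?case using Pol_const[OF assms(1), of 0] by simp
next
  case (insert x S) thus ?case using Pol_add[OF assms(1), of "f x" D "\<lambda>a. \<Sum>x\<in>S. f x a"] by simp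
qed

lemma Pol_prod: assumes "finite I" "finite S" "\<And>x. x \<in> S \<Longrightarrow> f x \<in> Pol I (d x)"
  shows "(\<lambda>a. \<Prod>x\<in>S. f x a) \<in> Pol I (sum d S)"
  using assms(2,3)
proof (induction S rule: finite_induct)
  case empty thus ?case using Pol_const[OF assms(1), of 1] by simp
next
  case (insert x S) thus ?case using Pol_mult[OF assms(1), of "f x" "d x" "\<lambda>a. \<Prod>x\<in>S. f x a"] by simp
qed

lemma Pol_pow: assumes "finite I" "f \<in> Pol I D" shows "(\<lambda>a. f a ^ m) \<in> Pol I (m * D)"
proof (induction m)
  case 0 thus ?case using Pol_const[OF assms(1), of 1] by simp
next
  case (Suc m) thus ?case using Pol_mult[OF assms(1) assms(2) Suc] by simp
qed

lemma Pol_monoI: assumes "finite I" shows "monoI I \<alpha> \<in> Pol I (sum \<alpha> I)"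
proof -
  have "(\<lambda>a. \<Prod>j\<in>I. a j ^ \<alpha> j) \<in> Pol I (\<Sum>j\<in>I. \<alpha> j * 1)"
    by (rule Pol_prod[OF assms assms]) (rule Pol_pow[OF assms Pol_var[OF assms]], auto)
  thus ?thesis by (simp add: monoI_def[abs_def])
qed



definition esym :: "nat set \<Rightarrow> nat \<Rightarrow> (nat \<Rightarrow> complex) \<Rightarrow> complex" where
  "esym J r a = (\<Sum>S\<in>{S. S \<subseteq> J \<and> card S = r}. \<Prod>i\<in>S. a i)"

lemma esym_0: assumes "finite J" shows "esym J 0 a = 1"
proof -
  have "{S. S \<subseteq> J \<and> card S = 0} = {{}}"
  proof (intro equalityI subsetI)
    fix S assume S: "S \<in> {S. S \<subseteq> J \<and> card S = 0}"
    hence "finite S" using assms rev_finite_subset by blast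
    thus "S \<in> {{}}" using S by simp
  qed auto
  thus ?thesis by (simp add: esym_def)
qed

lemma esym_big: assumes "finite J" "card J < r" shows "esym J r a = 0"
proof -
  have "{S. S \<subseteq> J \<and> card S = r} = {}"
  proof (intro equalityI subsetI)
    fix S assume S: "S \<in> {S. S \<subseteq> J \<and> card S = r}"
    hence "card S \<le> card J" using assms(1) card_mono by blast
    thus "S \<in> {}" using S assms(2) by simp
  qed auto
  thus ?thesis unfolding esym_def by (simp only: sum.empty)
qed

lemma esym_cong: "(\<And>i. i \<in> J \<Longrightarrow> a i = b i) \<Longrightarrow> esym J r a = esym J r b"
  unfolding esym_def by (intro sum.cong refl prod.cong) auto

lemma esym_insert: assumes "finite J" "c \<notin> J"
  shows "esym (insert c J) (Suc r) a = esym J (Suc r) a + a c * esym J r a"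
proof -
  have eq: "{S. S \<subseteq> insert c J \<and> card S = Suc r} =
     {S. S \<subseteq> J \<and> card S = Suc r} \<union> insert c ` {S. S \<subseteq> J \<and> card S = r}"
  proof (intro equalityI subsetI)
    fix S assume S: "S \<in> {S. S \<subseteq> insert c J \<and> card S = Suc r}"
    show "S \<in> {S. S \<subseteq> J \<and> card S = Suc r} \<union> insert c ` {S. S \<subseteq> J \<and> card S = r}"
    proof (cases "c \<in> S")
      case True
      have fS: "finite S" using S assms rev_finite_subset[of "insert c J" S] by auto
      have "S = insert c (S - {c})" using True by auto
      moreover have "card (S - {c}) = r" using S True fS by auto
      moreover have "S - {c} \<subseteq> J" using S by auto
      ultimately show ?thesis by blast
    next
      case False thus ?thesis using S by auto
    qed
  next
    fix S assume "S \<in> {S. S \<subseteq> J \<and> card S = Suc r} \<union> insert c ` {S. S \<subseteq> J \<and> card S = r}"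
    thus "S \<in> {S. S \<subseteq> insert c J \<and> card S = Suc r}"
    proof
      assume "S \<in> insert c ` {S. S \<subseteq> J \<and> card S = r}"
      then obtain T where T: "T \<subseteq> J" "card T = r" "S = insert c T" by auto
      have "finite T" using T assms rev_finite_subset by blast
      moreover have "c \<notin> T" using T assms by blast
      ultimately show ?thesis using T assms by auto
    qed auto
  qed
  have fin: "finite {S. S \<subseteq> J \<and> card S = r'}" for r' using assms by auto
  have disj: "{S. S \<subseteq> J \<and> card S = Suc r} \<inter> insert c ` {S. S \<subseteq> J \<and> card S = r} = {}"
    using assms by auto
  have inj: "inj_on (insert c) {S. S \<subseteq> J \<and> card S = r}"
  proof (intro inj_onI)
    fix S T assume S: "S \<in> {S. S \<subseteq> J \<and> card S = r}" and T: "T \<in> {S. S \<subseteq> J \<and> card S = r}"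
      and e: "insert c S = insert c T"
    have "c \<notin> S" "c \<notin> T" using S T assms(2) by auto
    hence "S = insert c S - {c}" "T = insert c T - {c}" by auto
    thus "S = T" using e by simp
  qed
  have "esym (insert c J) (Suc r) a = esym J (Suc r) a + (\<Sum>S\<in>insert c ` {S. S \<subseteq> J \<and> card S = r}. \<Prod>i\<in>S. a i)"
    unfolding esym_def eq by (rule sum.union_disjoint) (use fin disj in auto)
  also have "(\<Sum>S\<in>insert c ` {S. S \<subseteq> J \<and> card S = r}. \<Prod>i\<in>S. a i)
      = (\<Sum>S\<in>{S. S \<subseteq> J \<and> card S = r}. a c * (\<Prod>i\<in>S. a i))"
    unfolding sum.reindex[OF inj] o_def
  proof (intro sum.cong refl)
    fix S assume "S \<in> {S. S \<subseteq> J \<and> card S = r}"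
    hence "finite S" "c \<notin> S" using assms rev_finite_subset by blast+
    thus "prod a (insert c S) = a c * prod a S" by simp
  qed
  finally show ?thesis by (simp add: esym_def sum_distrib_left)
qed

lemma esym_image: assumes "inj_on \<pi> J" shows "esym (\<pi> ` J) r a = esym J r (\<lambda>i. a (\<pi> i))"
proof -
  have "{S. S \<subseteq> \<pi> ` J \<and> card S = r} = image \<pi> ` {S. S \<subseteq> J \<and> card S = r}"
  proof (intro equalityI subsetI)
    fix S assume S: "S \<in> {S. S \<subseteq> \<pi> ` J \<and> card S = r}"
    define T where "T = {x\<in>J. \<pi> x \<in> S}"
    have "S = \<pi> ` T" using S unfolding T_def by blast
    moreover have "inj_on \<pi> T" using assms by (auto simp: T_def intro: inj_on_subset)
    ultimately have "card T = r" using S card_image[of \<pi> T] by simp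
    moreover have "T \<subseteq> J" unfolding T_def by blast
    ultimately show "S \<in> image \<pi> ` {S. S \<subseteq> J \<and> card S = r}" using \<open>S = \<pi> ` T\<close> by blast
  next
    fix S assume "S \<in> image \<pi> ` {S. S \<subseteq> J \<and> card S = r}"
    then obtain T where "T \<subseteq> J" "card T = r" "S = \<pi> ` T" by auto
    moreover have "inj_on \<pi> T" using assms \<open>T \<subseteq> J\<close> by (auto intro: inj_on_subset)
    ultimately show "S \<in> {S. S \<subseteq> \<pi> ` J \<and> card S = r}" using card_image[of \<pi> T] by blast
  qed
  moreover have inj: "inj_on (image \<pi>) {S. S \<subseteq> J \<and> card S = r}"
    using inj_on_image_Pow[OF assms] by (rule inj_on_subset) auto
  ultimately have "esym (\<pi> ` J) r a = (\<Sum>T\<in>{S. S \<subseteq> J \<and> card S = r}. prod a (\<pi> ` T))"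
    unfolding esym_def by (simp only: sum.reindex[OF inj] o_def)
  also have "\<dots> = (\<Sum>T\<in>{S. S \<subseteq> J \<and> card S = r}. \<Prod>i\<in>T. a (\<pi> i))"
  proof (intro sum.cong refl)
    fix T assume "T \<in> {S. S \<subseteq> J \<and> card S = r}"
    hence "inj_on \<pi> T" using assms inj_on_subset by blast
    thus "prod a (\<pi> ` T) = (\<Prod>i\<in>T. a (\<pi> i))" by (simp add: prod.reindex)
  qed
  finally show ?thesis unfolding esym_def .
qed

lemma Pol_esym: assumes "finite I" "J \<subseteq> I" shows "esym J r \<in> Pol I r"
proof -
  have fJ: "finite J" using assms rev_finite_subset by blast
  have "(\<lambda>a. \<Sum>S\<in>{S. S \<subseteq> J \<and> card S = r}. \<Prod>i\<in>S. a i) \<in> Pol I r"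
  proof (rule Pol_sum[OF assms(1)])
    show "finite {S. S \<subseteq> J \<and> card S = r}" using fJ by auto
    fix S assume S: "S \<in> {S. S \<subseteq> J \<and> card S = r}"
    have "(\<lambda>a. \<Prod>i\<in>S. a i) \<in> Pol I (\<Sum>i\<in>S. 1)"
    proof (rule Pol_prod[OF assms(1)])
      show "finite S" using S fJ rev_finite_subset by blast
      fix i assume "i \<in> S" thus "(\<lambda>a. a i) \<in> Pol I 1" using S assms by (intro Pol_var) auto
    qed
    thus "(\<lambda>a. \<Prod>i\<in>S. a i) \<in> Pol I r" using S by simp
  qed
  thus ?thesis by (simp add: esym_def[abs_def])
qed

section \<open>Vieta\<close>

lemma linmul_coeff: fixes x :: complex shows "coeff ([:-x, 1:] * P) k = (if k = 0 then - x * coeff P 0 else coeff P (k - 1) - x * coeff P k)"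
proof -
  have "[:-x, 1:] * P = pCons 0 P - Polynomial.smult x P" by (simp add: algebra_simps)
  thus ?thesis by (cases k) auto
qed

lemma vieta_coeff: assumes "finite J"
  shows "coeff (\<Prod>c\<in>J. [:- a c, 1:]) k =
    (if k \<le> card J then (-1)^(card J - k) * esym J (card J - k) a else 0)"
  using assms
proof (induction J arbitrary: k rule: finite_induct)
  case empty thus ?case by (cases k) (auto simp: esym_0)
next
  case (insert c J)
  let ?P = "\<Prod>c\<in>J. [:- a c, 1:]"
  let ?m = "card J"
  have cd: "card (insert c J) = Suc ?m" using insert by simp
  have "coeff (\<Prod>c\<in>insert c J. [:- a c, 1:]) k = coeff ([:-a c, 1:] * ?P) k"
    using insert by simp
  also have "\<dots> = (if k = 0 then - a c * coeff ?P 0 else coeff ?P (k - 1) - a c * coeff ?P k)"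
    by (rule linmul_coeff)
  also have "\<dots> = (if k \<le> Suc ?m then (-1)^(Suc ?m - k) * esym (insert c J) (Suc ?m - k) a else 0)"
  proof (cases k)
    case 0
    thus ?thesis using insert by (simp add: esym_insert esym_big)
  next
    case (Suc k')
    show ?thesis
    proof (cases "k' \<le> ?m")
      case False thus ?thesis using Suc insert by simp
    next
      case True
      show ?thesis
      proof (cases "k' = ?m")
        case True thus ?thesis using Suc insert by (simp add: esym_0)
      next
        case False
        then obtain j where j: "?m - k' = Suc j" using True by (metis Suc_diff_Suc le_neq_implies_less)
        hence "?m - Suc k' = j" by simp
        thus ?thesis using Suc insert True j by (simp add: esym_insert algebra_simps)
      qed
    qed
  qed
  finally show ?case unfolding cd .
qed

lemma degree_vieta: fixes a :: "nat \<Rightarrow> complex" assumes "finite J" shows "degree (\<Prod>c\<in>J. [:- a c, 1:]) \<le> card J"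
  by (rule degree_le) (simp add: vieta_coeff assms)

lemma poly_sum_upto: fixes P :: "complex poly" assumes "degree P \<le> m" shows "poly P x = (\<Sum>i\<le>m. coeff P i * x ^ i)"
proof -
  have "poly P x = (\<Sum>i\<le>degree P. coeff P i * x ^ i)" by (rule poly_altdef)
  also have "\<dots> = (\<Sum>i\<le>m. coeff P i * x ^ i)"
    by (rule sum.mono_neutral_left) (use assms in \<open>auto simp: coeff_eq_0\<close>)
  finally show ?thesis .
qed

lemma vieta_fun: assumes "finite J"
  shows "(\<Prod>c\<in>J. x - a c) = (\<Sum>k\<le>card J. (-1)^(card J - k) * esym J (card J - k) a * x ^ k)"
proof -
  have "(\<Prod>c\<in>J. x - a c) = poly (\<Prod>c\<in>J. [:- a c, 1:]) x" by (simp add: poly_prod)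
  also have "\<dots> = (\<Sum>k\<le>card J. coeff (\<Prod>c\<in>J. [:- a c, 1:]) k * x ^ k)"
    by (rule poly_sum_upto[OF degree_vieta[OF assms]])
  also have "\<dots> = (\<Sum>k\<le>card J. (-1)^(card J - k) * esym J (card J - k) a * x ^ k)"
    by (intro sum.cong refl) (simp add: vieta_coeff assms)
  finally show ?thesis .
qed

lemma vieta_eq: assumes "finite J" "\<And>r. r \<le> card J \<Longrightarrow> esym J r a = esym J r b"
  shows "(\<Prod>c\<in>J. [:- a c, 1:]) = (\<Prod>c\<in>J. [:- b c, 1:])"
  unfolding poly_eq_iff
proof
  fix k
  show "coeff (\<Prod>c\<in>J. [:- a c, 1:]) k = coeff (\<Prod>c\<in>J. [:- b c, 1:]) k"
    by (simp add: vieta_coeff assms)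
qed

section \<open>Derivatives of esym along curves\<close>

lemma esym_deriv:
  assumes "finite J" "\<And>c. c \<in> J \<Longrightarrow> ((\<lambda>t. b t c) has_field_derivative b' c) (at t0)"
  shows "((\<lambda>t. esym J (Suc r) (b t)) has_field_derivative (\<Sum>c\<in>J. b' c * esym (J - {c}) r (b t0))) (at t0)"
  using assms
proof (induction J arbitrary: r rule: finite_induct)
  case empty thus ?case by (simp add: esym_big)
next
  case (insert c J)
  have dc: "((\<lambda>t. b t c) has_field_derivative b' c) (at t0)" using insert by auto
  have dJ: "\<And>r. ((\<lambda>t. esym J (Suc r) (b t)) has_field_derivative (\<Sum>e\<in>J. b' e * esym (J - {e}) r (b t0))) (at t0)"
    using insert by auto
  have eqf: "(\<lambda>t. esym (insert c J) (Suc r) (b t)) = (\<lambda>t. esym J (Suc r) (b t) + b t c * esym J r (b t))"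
    using insert by (simp add: esym_insert)
  have rem: "insert c J - {e} = insert c (J - {e})" if "e \<in> J" for e using that insert by auto
  show ?case
  proof (cases r)
    case 0
    have "((\<lambda>t. esym J (Suc 0) (b t) + b t c * esym J 0 (b t)) has_field_derivative
          (\<Sum>e\<in>J. b' e * esym (J - {e}) 0 (b t0)) + b' c * 1) (at t0)"
      using dJ[of 0] dc insert by (auto simp: esym_0 intro!: derivative_eq_intros)
    moreover have "(\<Sum>e\<in>insert c J. b' e * esym (insert c J - {e}) 0 (b t0)) = (\<Sum>e\<in>J. b' e * esym (J - {e}) 0 (b t0)) + b' c * 1"
      using insert by (simp add: esym_0 add.commute)
    ultimately show ?thesis using 0 eqf by simp
  next
    case (Suc r')
    have "((\<lambda>t. esym J (Suc r) (b t) + b t c * esym J r (b t)) has_field_derivative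
          (\<Sum>e\<in>J. b' e * esym (J - {e}) r (b t0)) + (b' c * esym J r (b t0) + b t0 c * (\<Sum>e\<in>J. b' e * esym (J - {e}) r' (b t0)))) (at t0)"
      using dJ[of r] dJ[of r'] dc Suc by (auto intro!: derivative_eq_intros)
    moreover have "(\<Sum>e\<in>insert c J. b' e * esym (insert c J - {e}) r (b t0)) =
       (\<Sum>e\<in>J. b' e * esym (J - {e}) r (b t0)) + (b' c * esym J r (b t0) + b t0 c * (\<Sum>e\<in>J. b' e * esym (J - {e}) r' (b t0)))"
    proof -
      have "(\<Sum>e\<in>insert c J. b' e * esym (insert c J - {e}) r (b t0)) = b' c * esym J r (b t0) + (\<Sum>e\<in>J. b' e * esym (insert c (J - {e})) r (b t0))"
        using insert by (simp add: rem)
      also have "(\<Sum>e\<in>J. b' e * esym (insert c (J - {e})) r (b t0)) = (\<Sum>e\<in>J. b' e * esym (J - {e}) r (b t0) + b t0 c * (b' e * esym (J - {e}) r' (b t0)))"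
        using insert Suc by (intro sum.cong refl) (simp add: esym_insert algebra_simps)
      finally show ?thesis by (simp add: sum.distrib sum_distrib_left algebra_simps)
    qed
    ultimately show ?thesis using eqf by simp
  qed
qed



section \<open>Matrices indexed by 1..n\<close>

definition mm :: "nat \<Rightarrow> (nat\<Rightarrow>nat\<Rightarrow>complex) \<Rightarrow> (nat\<Rightarrow>nat\<Rightarrow>complex) \<Rightarrow> nat \<Rightarrow> nat \<Rightarrow> complex" where
  "mm n X Y i j = (\<Sum>k\<in>{1..n}. X i k * Y k j)"
definition tr :: "(nat\<Rightarrow>nat\<Rightarrow>complex) \<Rightarrow> nat \<Rightarrow> nat \<Rightarrow> complex" where "tr X i j = X j i"
definition idm :: "nat \<Rightarrow> nat \<Rightarrow> complex" where "idm i j = (if i = j then 1 else 0)"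
definition eqn :: "nat \<Rightarrow> (nat\<Rightarrow>nat\<Rightarrow>complex) \<Rightarrow> (nat\<Rightarrow>nat\<Rightarrow>complex) \<Rightarrow> bool" where
  "eqn n X Y \<longleftrightarrow> (\<forall>i\<in>{1..n}. \<forall>j\<in>{1..n}. X i j = Y i j)"

lemma mm_assoc: "mm n (mm n X Y) Z = mm n X (mm n Y Z)"
  unfolding mm_def by (intro ext) (simp add: sum_distrib_left sum_distrib_right mult.assoc, rule sum.swap)

lemma mm_idm_right: assumes "j \<in> {1..n}" shows "mm n X idm i j = X i j"
proof -
  have "mm n X idm i j = (\<Sum>k\<in>{1..n}. if k = j then X i k else 0)"
    unfolding mm_def idm_def by (intro sum.cong) auto
  thus ?thesis using assms by (simp add: sum.delta')
qed

lemma mm_idm_left: assumes "i \<in> {1..n}" shows "mm n idm X i j = X i j"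
proof -
  have "mm n idm X i j = (\<Sum>k\<in>{1..n}. if i = k then X k j else 0)"
    unfolding mm_def idm_def by (intro sum.cong) auto
  thus ?thesis using assms by (simp add: sum.delta)
qed

lemma tr_tr[simp]: "tr (tr X) = X" by (simp add: tr_def[abs_def])

lemma tr_mm: "mm n (tr X) (tr Y) = tr (mm n Y X)"
  unfolding mm_def tr_def by (intro ext) (simp add: mult.commute)

lemma eqn_refl[simp]: "eqn n X X" by (simp add: eqn_def)
lemma eqn_sym: "eqn n X Y \<Longrightarrow> eqn n Y X" by (simp add: eqn_def)
lemma eqn_trans: "eqn n X Y \<Longrightarrow> eqn n Y Z \<Longrightarrow> eqn n X Z" by (simp add: eqn_def)
lemma eqn_tr: "eqn n X Y \<Longrightarrow> eqn n (tr X) (tr Y)" by (simp add: eqn_def tr_def)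

lemma mm_cong_right: "eqn n Y Y' \<Longrightarrow> j \<in> {1..n} \<Longrightarrow> mm n X Y i j = mm n X Y' i j"
  unfolding mm_def eqn_def by (intro sum.cong) auto
lemma mm_cong_left: "eqn n X X' \<Longrightarrow> i \<in> {1..n} \<Longrightarrow> mm n X Y i j = mm n X' Y i j"
  unfolding mm_def eqn_def by (intro sum.cong) auto
lemma eqn_mm_right: "eqn n Y Y' \<Longrightarrow> eqn n (mm n X Y) (mm n X Y')"
  by (simp add: eqn_def mm_cong_right)
lemma eqn_mm_left: "eqn n X X' \<Longrightarrow> eqn n (mm n X Y) (mm n X' Y)"
  by (simp add: eqn_def mm_cong_left)

lemma mm_cancel: assumes "eqn n (mm n X Y) idm" shows "eqn n (mm n X (mm n Y Z)) Z"
proof -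
  have "eqn n (mm n (mm n X Y) Z) (mm n idm Z)" by (rule eqn_mm_left[OF assms])
  thus ?thesis by (simp add: eqn_def mm_assoc mm_idm_left)
qed

lemma lr_inv: assumes "eqn n (mm n X Y) idm" shows "eqn n (mm n Y X) idm"
proof -
  define XM where "XM = mat n n (\<lambda>(i,j). X (Suc i) (Suc j))"
  define YM where "YM = mat n n (\<lambda>(i,j). Y (Suc i) (Suc j))"
  have XM: "XM \<in> carrier_mat n n" and YM: "YM \<in> carrier_mat n n" by (auto simp: XM_def YM_def)
  have ent: "(P * Q) $$ (i,j) = mm n R S (Suc i) (Suc j)"
    if "P = mat n n (\<lambda>(i,j). R (Suc i) (Suc j))" "Q = mat n n (\<lambda>(i,j). S (Suc i) (Suc j))" "i < n" "j < n" for P Q R S i j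
  proof -
    have "(P * Q) $$ (i,j) = (\<Sum>k\<in>{0..<n}. R (Suc i) (Suc k) * S (Suc k) (Suc j))"
      using that by (simp add: scalar_prod_def)
    also have "\<dots> = mm n R S (Suc i) (Suc j)"
      unfolding mm_def using sum.atLeast1_atMost_eq[of "\<lambda>k. R (Suc i) k * S k (Suc j)" n, symmetric]
      by (simp add: atLeast0LessThan)
    finally show ?thesis .
  qed
  have "XM * YM = 1\<^sub>m n"
  proof (rule eq_matI)
    fix i j assume "i < dim_row (1\<^sub>m n :: complex mat)" "j < dim_col (1\<^sub>m n :: complex mat)"
    hence ij: "i < n" "j < n" by auto
    have "(XM * YM) $$ (i,j) = mm n X Y (Suc i) (Suc j)" by (rule ent[OF XM_def YM_def ij])
    also have "\<dots> = idm (Suc i) (Suc j)" using assms ij by (auto simp: eqn_def)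
    finally show "(XM * YM) $$ (i,j) = 1\<^sub>m n $$ (i,j)" using ij by (simp add: idm_def)
  qed (auto simp: XM_def YM_def)
  hence YX: "YM * XM = 1\<^sub>m n" using mat_mult_left_right_inverse[OF XM YM] by blast
  show ?thesis unfolding eqn_def
  proof (intro ballI)
    fix i j assume i: "i \<in> {1..n}" and j: "j \<in> {1..n}"
    then obtain i' j' where ij: "i = Suc i'" "j = Suc j'" "i' < n" "j' < n"
      by (metis atLeastAtMost_iff Suc_le_eq not0_implies_Suc not_one_le_zero)
    have "mm n Y X i j = (YM * XM) $$ (i',j')" using ent[OF YM_def XM_def ij(3,4)] ij by simp
    also have "\<dots> = idm i j" using YX ij by (simp add: idm_def)
    finally show "mm n Y X i j = idm i j" .
  qed
qed

definition Amat :: "nat \<Rightarrow> (nat\<Rightarrow>complex) \<Rightarrow> nat \<Rightarrow> nat \<Rightarrow> complex" where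
  "Amat n a c k = esym ({1..n} - {c}) (k - 1) a"
definition Bmat :: "nat \<Rightarrow> (nat\<Rightarrow>complex) \<Rightarrow> nat \<Rightarrow> nat \<Rightarrow> complex" where
  "Bmat n a k c = (-1)^(k-1) * a c ^ (n-k) / (\<Prod>e\<in>{1..n}-{c}. a c - a e)"
definition Cm :: "nat \<Rightarrow> nat \<Rightarrow> complex" where "Cm c d = (if c = d then 0 else 4)"
definition Ci :: "nat \<Rightarrow> nat \<Rightarrow> nat \<Rightarrow> complex" where
  "Ci n c d = (1 / (of_nat n - 1) - (if c = d then 1 else 0)) / 4"
definition Gm :: "nat \<Rightarrow> (nat\<Rightarrow>complex) \<Rightarrow> nat \<Rightarrow> nat \<Rightarrow> complex" where
  "Gm n a = mm n (mm n (tr (Amat n a)) Cm) (Amat n a)"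
definition Lm :: "nat \<Rightarrow> (nat\<Rightarrow>complex) \<Rightarrow> nat \<Rightarrow> nat \<Rightarrow> complex" where
  "Lm n a = mm n (mm n (Bmat n a) (Ci n)) (tr (Bmat n a))"
definition dist_on :: "nat \<Rightarrow> (nat\<Rightarrow>complex) \<Rightarrow> bool" where
  "dist_on n a \<longleftrightarrow> (\<forall>i\<in>{1..n}. \<forall>j\<in>{1..n}. i \<noteq> j \<longrightarrow> a i \<noteq> a j)"

lemma prod_diff_nz: assumes "dist_on n a" "c \<in> {1..n}" shows "(\<Prod>e\<in>{1..n}-{c}. a c - a e) \<noteq> 0"
  using assms by (auto simp: dist_on_def)

lemma AB: assumes "dist_on n a" shows "eqn n (mm n (Amat n a) (Bmat n a)) idm"
  unfolding eqn_def
proof (intro ballI)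
  fix c d assume c: "c \<in> {1..n}" and d: "d \<in> {1..n}"
  let ?J = "{1..n} - {c}"
  have cJ: "card ?J = n - 1" using c by simp
  have "(\<Prod>e\<in>?J. a d - a e) = (\<Sum>k\<le>n-1. (-1)^(n-1-k) * esym ?J (n-1-k) a * a d ^ k)"
    using vieta_fun[of ?J "a d" a] cJ by simp
  also have "\<dots> = (\<Sum>k\<in>{1..n}. (-1)^(k-1) * esym ?J (k-1) a * a d ^ (n-k))"
  proof (rule sum.reindex_bij_witness[where i="\<lambda>k. n - k" and j="\<lambda>k. n - k"])
    fix k assume "k \<in> {1..n}" thus "n - k \<in> {..n-1}" "n - (n - k) = k" by auto
  next
    fix k assume k: "k \<in> {..n-1}"
    show "n - k \<in> {1..n}" using k c by auto
    show "n - (n - k) = k" using k c by auto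
    have "n - k - 1 = n - 1 - k" by simp
    thus "(-1)^(n - k - 1) * esym ?J (n - k - 1) a * a d ^ (n - (n - k)) = (-1)^(n-1-k) * esym ?J (n-1-k) a * a d ^ k"
      using k c by simp
  qed
  finally have num: "(\<Sum>k\<in>{1..n}. (-1)^(k-1) * esym ?J (k-1) a * a d ^ (n-k)) = (\<Prod>e\<in>?J. a d - a e)" ..
  have "mm n (Amat n a) (Bmat n a) c d = (\<Sum>k\<in>{1..n}. (-1)^(k-1) * esym ?J (k-1) a * a d ^ (n-k)) / (\<Prod>e\<in>{1..n}-{d}. a d - a e)"
    unfolding mm_def Amat_def Bmat_def by (simp add: sum_divide_distrib mult_ac)
  also have "\<dots> = (\<Prod>e\<in>?J. a d - a e) / (\<Prod>e\<in>{1..n}-{d}. a d - a e)" by (simp only: num)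
  also have "\<dots> = idm c d"
  proof (cases "c = d")
    case True thus ?thesis using prod_diff_nz[OF assms d] by (simp add: idm_def)
  next
    case False
    hence "d \<in> ?J" using d by auto
    hence "(\<Prod>e\<in>?J. a d - a e) = 0" by (intro prod_zero) auto
    thus ?thesis using False by (simp add: idm_def)
  qed
  finally show "mm n (Amat n a) (Bmat n a) c d = idm c d" .
qed

lemma BA: assumes "dist_on n a" shows "eqn n (mm n (Bmat n a) (Amat n a)) idm"
  by (rule lr_inv[OF AB[OF assms]])

lemma CCi: assumes "n \<ge> 2" shows "eqn n (mm n Cm (Ci n)) idm"
  unfolding eqn_def
proof (intro ballI)
  fix c d assume c: "c \<in> {1..n}" and d: "d \<in> {1..n}"
  have nz: "(of_nat n - 1 :: complex) \<noteq> 0" using assms by (metis of_nat_1 of_nat_eq_iff right_minus_eq numeral_le_one_iff semiring_norm(69) le_antisym one_le_numeral)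
  have "mm n Cm (Ci n) c d = (\<Sum>e\<in>{1..n}-{c}. Cm c e * Ci n e d)"
    using c by (simp add: mm_def sum.remove[of _ c] Cm_def)
  also have "\<dots> = (\<Sum>e\<in>{1..n}-{c}. (1 / (of_nat n - 1) - (if d = e then 1 else 0)))"
    by (intro sum.cong) (auto simp: Cm_def Ci_def)
  also have "\<dots> = (\<Sum>e\<in>{1..n}-{c}. 1 / (of_nat n - 1)) - (\<Sum>e\<in>{1..n}-{c}. (if d = e then 1 else 0))"
    by (simp add: sum_subtractf)
  also have "\<dots> = of_nat (n - 1) / (of_nat n - 1) - (if d \<in> {1..n}-{c} then 1 else 0)"
    using c by (simp add: sum.delta)
  also have "\<dots> = idm c d"
    using c d nz assms by (simp add: idm_def of_nat_diff)
  finally show "mm n Cm (Ci n) c d = idm c d" .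
qed

lemma Cm_sym: "tr Cm = Cm" by (auto simp: tr_def Cm_def intro!: ext)
lemma Ci_sym: "tr (Ci n) = Ci n" by (auto simp: tr_def Ci_def intro!: ext)

lemma Gm_sym: "tr (Gm n a) = Gm n a"
  unfolding Gm_def by (simp add: tr_mm[symmetric] mm_assoc Cm_sym flip: tr_mm)

lemma GL: assumes "n \<ge> 2" "dist_on n a" shows "eqn n (mm n (Gm n a) (Lm n a)) idm"
proof -
  let ?A = "Amat n a" and ?B = "Bmat n a"
  have "mm n (Gm n a) (Lm n a) = mm n (tr ?A) (mm n Cm (mm n ?A (mm n ?B (mm n (Ci n) (tr ?B)))))"
    by (simp add: Gm_def Lm_def mm_assoc)
  moreover have "eqn n (mm n ?A (mm n ?B (mm n (Ci n) (tr ?B)))) (mm n (Ci n) (tr ?B))"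
    by (rule mm_cancel[OF AB[OF assms(2)]])
  hence "eqn n (mm n Cm (mm n ?A (mm n ?B (mm n (Ci n) (tr ?B))))) (mm n Cm (mm n (Ci n) (tr ?B)))"
    by (rule eqn_mm_right)
  moreover have "eqn n (mm n Cm (mm n (Ci n) (tr ?B))) (tr ?B)" by (rule mm_cancel[OF CCi[OF assms(1)]])
  ultimately have "eqn n (mm n (Gm n a) (Lm n a)) (mm n (tr ?A) (tr ?B))"
    by (metis eqn_mm_right eqn_trans)
  moreover have "tr idm = idm" by (auto simp: tr_def idm_def intro!: ext)
  hence "eqn n (mm n (tr ?A) (tr ?B)) idm"
    using eqn_tr[OF BA[OF assms(2)]] by (simp only: tr_mm)
  ultimately show ?thesis by (rule eqn_trans)
qed

lemma LG: assumes "n \<ge> 2" "dist_on n a" shows "eqn n (mm n (Lm n a) (Gm n a)) idm"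
  by (rule lr_inv[OF GL[OF assms]])



lemma uC_esym: "uC n m p = esym {1..n} m (\<lambda>j. p j ^ 2)"
  by (simp add: uC_def esym_def)

lemma pd_uC: assumes k: "k \<in> {1..n}" and i: "i \<in> {1..n}"
  shows "pd (uC n i) p k = 2 * p k * Amat n (\<lambda>j. p j ^ 2) k i"
proof -
  obtain i' where i': "i = Suc i'" using i by (cases i) auto
  let ?J = "{1..n} - {k}"
  have ins: "{1..n} = insert k ?J" using k by auto
  have f: "uC n i (p(k := t)) = esym ?J (Suc i') (\<lambda>j. p j ^ 2) + t^2 * esym ?J i' (\<lambda>j. p j ^ 2)" for t
  proof -
    have "uC n i (p(k := t)) = esym (insert k ?J) (Suc i') (\<lambda>j. (p(k := t)) j ^ 2)"
      unfolding uC_esym i' using ins by simp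
    also have "\<dots> = esym ?J (Suc i') (\<lambda>j. (p(k := t)) j ^ 2) + t^2 * esym ?J i' (\<lambda>j. (p(k := t)) j ^ 2)"
      by (subst esym_insert) auto
    also have "esym ?J (Suc i') (\<lambda>j. (p(k := t)) j ^ 2) = esym ?J (Suc i') (\<lambda>j. p j ^ 2)"
      by (rule esym_cong) auto
    also have "esym ?J i' (\<lambda>j. (p(k := t)) j ^ 2) = esym ?J i' (\<lambda>j. p j ^ 2)"
      by (rule esym_cong) auto
    finally show ?thesis .
  qed
  have "pd (uC n i) p k = deriv (\<lambda>t. esym ?J (Suc i') (\<lambda>j. p j ^ 2) + t^2 * esym ?J i' (\<lambda>j. p j ^ 2)) (p k)"
    unfolding pd_def f ..
  also have "\<dots> = 2 * p k * esym ?J i' (\<lambda>j. p j ^ 2)"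
    by (rule DERIV_imp_deriv) (auto intro!: derivative_eq_intros)
  finally show ?thesis using i' by (simp add: Amat_def)
qed

lemma Gm_sum: "Gm n a i j = (\<Sum>k\<in>{1..n}. \<Sum>l\<in>{1..n}. Cm k l * Amat n a k i * Amat n a l j)"
  unfolding Gm_def mm_def tr_def sum_distrib_right
  by (subst sum.swap) (simp add: mult_ac)

lemma Gm_perm:
  assumes bij: "bij_betw \<pi> {1..n} {1..n}" and ab: "\<And>d. d \<in> {1..n} \<Longrightarrow> a' (\<pi> d) = b d"
  shows "Gm n a' i j = Gm n b i j"
proof -
  have inj: "inj_on \<pi> {1..n}" using bij by (rule bij_betw_imp_inj_on)
  have img: "\<pi> ` {1..n} = {1..n}" using bij by (rule bij_betw_imp_surj_on)
  have A: "Amat n a' (\<pi> k) i = Amat n b k i" if k: "k \<in> {1..n}" for k i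
  proof -
    have "\<pi> ` ({1..n} - {k}) = \<pi> ` {1..n} - \<pi> ` {k}"
      using inj_on_image_set_diff[OF inj, of "{1..n}" "{k}"] k by blast
    hence e: "{1..n} - {\<pi> k} = \<pi> ` ({1..n} - {k})" using img by simp
    have i2: "inj_on \<pi> ({1..n} - {k})" using inj by (rule inj_on_subset) blast
    have "Amat n a' (\<pi> k) i = esym ({1..n} - {k}) (i - 1) (\<lambda>d. a' (\<pi> d))"
      unfolding Amat_def e by (rule esym_image[OF i2])
    also have "\<dots> = Amat n b k i" unfolding Amat_def by (rule esym_cong) (simp add: ab)
    finally show ?thesis .
  qed
  have C: "Cm (\<pi> k) (\<pi> l) = Cm k l" if "k \<in> {1..n}" "l \<in> {1..n}" for k l
  proof -
    have "\<pi> k = \<pi> l \<longleftrightarrow> k = l" using inj that by (meson inj_on_eq_iff)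
    thus ?thesis by (simp add: Cm_def)
  qed
  have "Gm n a' i j = (\<Sum>k\<in>\<pi> ` {1..n}. \<Sum>l\<in>\<pi> ` {1..n}. Cm k l * Amat n a' k i * Amat n a' l j)"
    unfolding Gm_sum img ..
  also have "\<dots> = (\<Sum>k\<in>{1..n}. \<Sum>l\<in>{1..n}. Cm (\<pi> k) (\<pi> l) * Amat n a' (\<pi> k) i * Amat n a' (\<pi> l) j)"
    by (simp only: sum.reindex[OF inj] o_def)
  also have "\<dots> = Gm n b i j"
    unfolding Gm_sum by (intro sum.cong refl) (simp add: A C)
  finally show ?thesis .
qed

definition nzon :: "nat \<Rightarrow> (nat \<Rightarrow> complex) \<Rightarrow> bool" where
  "nzon n b \<longleftrightarrow> (\<forall>c\<in>{1..n}. b c \<noteq> 0)"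

lemma fiber_perm:
  assumes "dist_on n b" and eq: "\<And>m. m \<in> {1..n} \<Longrightarrow> esym {1..n} m a' = esym {1..n} m b"
  obtains \<pi> where "bij_betw \<pi> {1..n} {1..n}" "\<And>d. d \<in> {1..n} \<Longrightarrow> a' (\<pi> d) = b d"
proof -
  have "(\<Prod>c\<in>{1..n}. [:- a' c, 1:]) = (\<Prod>c\<in>{1..n}. [:- b c, 1:])"
  proof (rule vieta_eq)
    fix r assume "r \<le> card {1..n::nat}"
    thus "esym {1..n} r a' = esym {1..n} r b"
      using eq[of r] by (cases "r = 0") (auto simp: esym_0)
  qed simp
  hence "poly (\<Prod>c\<in>{1..n}. [:- a' c, 1:]) x = poly (\<Prod>c\<in>{1..n}. [:- b c, 1:]) x" for x
    by simp
  hence ev: "(\<Prod>c\<in>{1..n}. x - a' c) = (\<Prod>c\<in>{1..n}. x - b c)" for x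
    by (simp add: poly_prod)
  have ex: "\<exists>c\<in>{1..n}. a' c = b d" if d: "d \<in> {1..n}" for d
  proof -
    have "(\<Prod>c\<in>{1..n}. b d - b c) = 0" using d by (intro prod_zero) auto
    hence "(\<Prod>c\<in>{1..n}. b d - a' c) = 0" using ev by simp
    then obtain c where "c \<in> {1..n}" "b d - a' c = 0" using prod_zero_iff[of "{1..n}"] by auto
    thus ?thesis by auto
  qed
  define \<pi> where "\<pi> d = (SOME c. c \<in> {1..n} \<and> a' c = b d)" for d
  have \<pi>: "\<pi> d \<in> {1..n} \<and> a' (\<pi> d) = b d" if "d \<in> {1..n}" for d
    unfolding \<pi>_def using someI_ex[OF ex[OF that, unfolded Bex_def]] .
  have inj: "inj_on \<pi> {1..n}"
  proof (rule inj_onI)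
    fix x y assume "x \<in> {1..n}" "y \<in> {1..n}" "\<pi> x = \<pi> y"
    hence "b x = b y" using \<pi> by metis
    thus "x = y" using assms(1) \<open>x \<in> {1..n}\<close> \<open>y \<in> {1..n}\<close> unfolding dist_on_def by blast
  qed
  have "\<pi> ` {1..n} = {1..n}" by (rule endo_inj_surj) (use \<pi> inj in auto)
  hence "bij_betw \<pi> {1..n} {1..n}" using inj by (simp add: bij_betw_def)
  thus ?thesis using that \<pi> by blast
qed

lemma gU_expr:
  assumes "nzon n p" "i \<in> {1..n}" "j \<in> {1..n}"
  shows "(\<Sum>k=1..n. \<Sum>l=1..n. gP k l p * pd (uC n i) p k * pd (uC n j) p l) = Gm n (\<lambda>j. p j ^ 2) i j"
  unfolding Gm_sum
proof (intro sum.cong refl)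
  fix k l assume k: "k \<in> {1..n}" and l: "l \<in> {1..n}"
  have "p k \<noteq> 0" "p l \<noteq> 0" using assms k l by (auto simp: nzon_def)
  thus "gP k l p * pd (uC n i) p k * pd (uC n j) p l = Cm k l * Amat n (\<lambda>j. p j ^ 2) k i * Amat n (\<lambda>j. p j ^ 2) l j"
    using k l assms by (simp add: pd_uC gP_def Cm_def field_simps)
qed

lemma gU_val:
  assumes b: "dist_on n b" "nzon n b" and v: "\<And>m. m \<in> {1..n} \<Longrightarrow> v m = esym {1..n} m b"
    and ij: "i \<in> {1..n}" "j \<in> {1..n}"
  shows "gU n i j v = Gm n b i j"
  unfolding gU_def
proof (rule some_equality)
  define p0 where "p0 = (\<lambda>j. csqrt (b j))"
  have "nzon n p0" using b by (auto simp: nzon_def p0_def)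
  moreover have "uC n m p0 = v m" if "m \<in> {1..n}" for m
    unfolding uC_esym v[OF that] p0_def by (rule esym_cong) simp
  moreover have "Gm n (\<lambda>j. p0 j ^ 2) i j = Gm n b i j"
    unfolding Gm_sum Amat_def p0_def by simp
  ultimately show "\<exists>p. (\<forall>k\<in>{1..n}. p k \<noteq> 0) \<and> (\<forall>m\<in>{1..n}. uC n m p = v m) \<and>
     Gm n b i j = (\<Sum>k = 1..n. \<Sum>l = 1..n. gP k l p * pd (uC n i) p k * pd (uC n j) p l)"
    using gU_expr[of n p0 i j] ij by (auto simp: nzon_def)
next
  fix w assume "\<exists>p. (\<forall>k\<in>{1..n}. p k \<noteq> 0) \<and> (\<forall>m\<in>{1..n}. uC n m p = v m) \<and>
     w = (\<Sum>k = 1..n. \<Sum>l = 1..n. gP k l p * pd (uC n i) p k * pd (uC n j) p l)"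
  then obtain p where p: "nzon n p" "\<And>m. m \<in> {1..n} \<Longrightarrow> uC n m p = v m"
    and w: "w = (\<Sum>k = 1..n. \<Sum>l = 1..n. gP k l p * pd (uC n i) p k * pd (uC n j) p l)"
    by (auto simp: nzon_def)
  have "w = Gm n (\<lambda>j. p j ^ 2) i j" using w gU_expr[OF p(1) ij] by simp
  moreover have "esym {1..n} m (\<lambda>j. p j ^ 2) = esym {1..n} m b" if "m \<in> {1..n}" for m
    using p(2)[OF that] v[OF that] by (simp add: uC_esym)
  then obtain \<pi> where \<pi>: "bij_betw \<pi> {1..n} {1..n}" "\<And>d. d \<in> {1..n} \<Longrightarrow> (\<lambda>j. p j ^ 2) (\<pi> d) = b d"
    using fiber_perm[OF b(1), of "\<lambda>j. p j ^ 2"] by blast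
  ultimately show "w = Gm n b i j" using Gm_perm[of \<pi> n "\<lambda>j. p j ^ 2" b, OF \<pi>] by simp
qed

lemma gL_val:
  assumes n: "n \<ge> 2" and b: "dist_on n b" "nzon n b" and v: "\<And>m. m \<in> {1..n} \<Longrightarrow> v m = esym {1..n} m b"
    and lk: "l \<in> {1..n}" "k \<in> {1..n}"
  shows "gL n v l k = Lm n b l k"
proof -
  have gU: "gU n i j v = Gm n b i j" if "i \<in> {1..n}" "j \<in> {1..n}" for i j
    by (rule gU_val[OF b v that])
  let ?P = "\<lambda>G. \<forall>i\<in>{1..n}. \<forall>k\<in>{1..n}. (\<Sum>j=1..n. gU n i j v * G j k) = (if i = k then 1 else 0)"
  have "?P (Lm n b)"
    using GL[OF n b(1)] by (simp add: eqn_def mm_def gU idm_def)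
  moreover have "gL n v = (SOME G. ?P G)" by (simp add: gL_def)
  ultimately have P: "?P (gL n v)" using someI[of ?P "Lm n b"] by simp
  have "eqn n (mm n (Gm n b) (gL n v)) idm"
    using P by (simp add: eqn_def mm_def gU idm_def)
  hence "eqn n (mm n (Lm n b) (mm n (Gm n b) (gL n v))) (mm n (Lm n b) idm)"
    by (rule eqn_mm_right)
  moreover have "eqn n (mm n (mm n (Lm n b) (Gm n b)) (gL n v)) (mm n idm (gL n v))"
    by (rule eqn_mm_left[OF LG[OF n b(1)]])
  ultimately have "eqn n (mm n idm (gL n v)) (mm n (Lm n b) idm)"
    unfolding mm_assoc by (metis eqn_trans eqn_sym)
  thus ?thesis using lk by (simp add: eqn_def mm_idm_left mm_idm_right)
qed



lemma degree_less_from_coeff: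
  fixes P :: "complex poly"
  assumes "degree P \<le> n" "coeff P n = 0" "n > 0" shows "degree P < n"
proof (cases "P = 0")
  case True thus ?thesis using assms by simp
next
  case False
  show ?thesis
  proof (rule ccontr)
    assume "\<not> degree P < n"
    hence "degree P = n" using assms by simp
    hence "lead_coeff P = 0" using assms by simp
    thus False using False by simp
  qed
qed

lemma roots_to_esym:
  fixes a b :: "nat \<Rightarrow> complex"
  assumes b: "dist_on n b" and s: "s \<in> {1..n}"
    and root: "\<And>c. c \<in> {1..n} \<Longrightarrow> (\<Prod>e\<in>{1..n}. b c - a e) + (-1)^s * (t - us) * b c ^ (n - s) = 0"
    and m: "m \<in> {1..n}"
  shows "esym {1..n} m b = esym {1..n} m a + (if m = s then t - us else 0)"
proof -
  define P1 where "P1 = (\<Prod>c\<in>{1..n}. [:- b c, 1:])"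
  define P2 where "P2 = (\<Prod>c\<in>{1..n}. [:- a c, 1:]) + Polynomial.monom ((-1)^s * (t - us)) (n - s)"
  have n: "n > 0" using s by auto
  have "degree (P1 - P2) \<le> n"
  proof -
    have "degree P1 \<le> n" unfolding P1_def using degree_vieta[of "{1..n}" b] by simp
    moreover have "degree P2 \<le> n" unfolding P2_def
    proof (rule degree_add_le)
      show "degree (\<Prod>c\<in>{1..n}. [:- a c, 1:]) \<le> n" using degree_vieta[of "{1..n}" a] by simp
      show "degree (Polynomial.monom ((-1)^s * (t - us)) (n - s)) \<le> n"
        using degree_monom_le[of "(-1)^s * (t - us)" "n - s"] by simp
    qed
    ultimately show ?thesis by (intro order.trans[OF degree_diff_le_max]) auto
  qed
  moreover have "n - s \<noteq> n" using s by auto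
  hence "coeff (P1 - P2) n = 0"
    by (simp add: P1_def P2_def vieta_coeff esym_0)
  ultimately have deg: "degree (P1 - P2) < n" using n by (rule degree_less_from_coeff)
  have inj: "inj_on b {1..n}" using b by (auto simp: dist_on_def inj_on_def)
  have "P1 - P2 = 0"
  proof (rule poly_eqI_degree[where A="b ` {1..n}"])
    fix x assume "x \<in> b ` {1..n}"
    then obtain c where c: "c \<in> {1..n}" "x = b c" by auto
    have "poly P1 x = 0" unfolding P1_def poly_prod using c by (intro prod_zero) auto
    moreover have "poly P2 x = 0" unfolding P2_def using root[OF c(1)] c
      by (simp add: poly_prod poly_monom mult.assoc)
    ultimately show "poly (P1 - P2) x = poly 0 x" by simp
  next
    show "degree (P1 - P2) < card (b ` {1..n})" using deg card_image[OF inj] by simp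
    thus "degree (0::complex poly) < card (b ` {1..n})" by simp
  qed
  hence "coeff P1 (n - m) = coeff P2 (n - m)" by simp
  moreover have "coeff P1 (n - m) = (-1)^m * esym {1..n} m b" using m by (simp add: P1_def vieta_coeff)
  moreover have "(n - s = n - m) = (m = s)" using m s by auto
  hence "coeff P2 (n - m) = (-1)^m * esym {1..n} m a + (if m = s then (-1)^s * (t - us) else 0)"
    using m s by (simp add: P2_def vieta_coeff)
  ultimately have "(-1)^m * esym {1..n} m b = (-1)^m * (esym {1..n} m a + (if m = s then t - us else 0))"
    by (simp add: algebra_simps)
  moreover have "(-1::complex)^m \<noteq> 0" by simp
  ultimately show ?thesis by (metis mult_left_cancel)
qed

lemma curve:
  fixes a :: "nat \<Rightarrow> complex"
  assumes n: "n \<ge> 2" and a: "dist_on n a" "nzon n a" and s: "s \<in> {1..n}"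
  obtains N \<psi> \<psi>' where "open N" "esym {1..n} s a \<in> N"
   "\<And>t. t \<in> N \<Longrightarrow> dist_on n (\<psi> t) \<and> nzon n (\<psi> t)"
   "\<And>t m. t \<in> N \<Longrightarrow> m \<in> {1..n} \<Longrightarrow> esym {1..n} m (\<psi> t) = (if m = s then t else esym {1..n} m a)"
   "\<And>c. c \<in> {1..n} \<Longrightarrow> \<psi> (esym {1..n} s a) c = a c"
   "\<And>c. c \<in> {1..n} \<Longrightarrow> ((\<lambda>t. \<psi> t c) has_field_derivative \<psi>' c) (at (esym {1..n} s a))"
proof -
  define us where "us = esym {1..n} s a"
  define Pi where "Pi = (\<lambda>x. \<Prod>e\<in>{1..n}. x - a e)"
  define \<phi> where "\<phi> = (\<lambda>x. us - (-1)^s * Pi x / x^(n-s))"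
  define DS where "DS = (\<lambda>(c,e). cmod (a c - a e)) ` {(c,e). c \<in> {1..n} \<and> e \<in> {1..n} \<and> c \<noteq> e} \<union> (\<lambda>c. cmod (a c)) ` {1..n}"
  define R where "R = Min DS / 2"
  have "finite {(c,e). c \<in> {1..n} \<and> e \<in> {1..n} \<and> c \<noteq> e}"
    by (rule finite_subset[of _ "{1..n} \<times> {1..n}"]) auto
  hence finDS: "finite DS" unfolding DS_def by blast
  have "cmod (a 1) \<in> DS" unfolding DS_def using n by auto
  hence neDS: "DS \<noteq> {}" by blast
  have posDS: "\<forall>x\<in>DS. x > 0" using a unfolding DS_def dist_on_def nzon_def by auto
  have R: "R > 0" using Min_in[OF finDS neDS] posDS by (simp add: R_def)
  have Rc: "2*R \<le> cmod (a c)" if "c \<in> {1..n}" for c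
  proof -
    have "cmod (a c) \<in> DS" using that unfolding DS_def by blast
    thus ?thesis using Min_le[OF finDS] by (simp add: R_def)
  qed
  have Rce: "2*R \<le> cmod (a c - a e)" if "c \<in> {1..n}" "e \<in> {1..n}" "c \<noteq> e" for c e
  proof -
    have "(c,e) \<in> {(c,e). c \<in> {1..n} \<and> e \<in> {1..n} \<and> c \<noteq> e}" using that by blast
    hence "cmod (a c - a e) \<in> DS" unfolding DS_def by (intro UnI1 image_eqI[where x="(c,e)"]) auto
    thus ?thesis using Min_le[OF finDS] by (simp add: R_def)
  qed
  have ball_nz: "x \<noteq> 0" if "c \<in> {1..n}" "x \<in> ball (a c) R" for c x
    using that Rc[OF that(1)] R by (auto simp: dist_norm)
  have ball_disj: "x \<noteq> y" if "c \<in> {1..n}" "e \<in> {1..n}" "c \<noteq> e" "x \<in> ball (a c) R" "y \<in> ball (a e) R" for c e x y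
  proof
    assume "x = y"
    hence "cmod (a c - x) < R" "cmod (x - a e) < R" using that by (auto simp: dist_norm norm_minus_commute)
    hence "cmod (a c - a e) < R + R" by (rule norm_diff_triangle_less)
    thus False using Rce[OF that(1-3)] by simp
  qed
  have holo: "\<phi> holomorphic_on (- {0})" unfolding \<phi>_def Pi_def by (intro holomorphic_intros) auto
  have Pi0: "Pi (a c) = 0" if "c \<in> {1..n}" for c unfolding Pi_def using that by (intro prod_zero) auto
  have phi_ac: "\<phi> (a c) = us" if "c \<in> {1..n}" for c using Pi0[OF that] by (simp add: \<phi>_def)
  have dnz: "deriv \<phi> (a c) \<noteq> 0" if c: "c \<in> {1..n}" for c
  proof -
    define Q where "Q = (\<Prod>e\<in>{1..n}-{c}. a c - a e)"
    have Qnz: "Q \<noteq> 0" unfolding Q_def using prod_diff_nz[OF a(1) c] .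
    have acnz: "a c \<noteq> 0" using a(2) c by (auto simp: nzon_def)
    have "(Pi has_field_derivative (\<Sum>e\<in>{1..n}. 1 * (\<Prod>y\<in>{1..n}-{e}. a c - a y))) (at (a c))"
      unfolding Pi_def by (rule has_field_derivative_prod) (auto intro!: derivative_eq_intros)
    moreover have "(\<Sum>e\<in>{1..n}. 1 * (\<Prod>y\<in>{1..n}-{e}. a c - a y)) = Q"
    proof -
      have "(\<Sum>e\<in>{1..n}. 1 * (\<Prod>y\<in>{1..n}-{e}. a c - a y)) = Q + (\<Sum>e\<in>{1..n}-{c}. 1 * (\<Prod>y\<in>{1..n}-{e}. a c - a y))"
        using c by (simp add: sum.remove[of _ c] Q_def)
      also have "(\<Sum>e\<in>{1..n}-{c}. 1 * (\<Prod>y\<in>{1..n}-{e}. a c - a y)) = 0"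
      proof (intro sum.neutral ballI)
        fix e assume e: "e \<in> {1..n}-{c}"
        have "(\<Prod>y\<in>{1..n}-{e}. a c - a y) = 0" using c e by (intro prod_zero) (auto intro!: bexI[of _ c])
        thus "1 * (\<Prod>y\<in>{1..n}-{e}. a c - a y) = 0" by simp
      qed
      finally show ?thesis by simp
    qed
    ultimately have dPi: "(Pi has_field_derivative Q) (at (a c))" by simp
    have dpow: "((\<lambda>x. x ^ (n-s)) has_field_derivative of_nat (n-s) * (1 * a c ^ (n - s - Suc 0))) (at (a c))"
      by (rule DERIV_power[OF DERIV_ident])
    have "((\<lambda>x. Pi x / x^(n-s)) has_field_derivative (Q * a c ^ (n-s) - Pi (a c) * (of_nat (n-s) * (1 * a c ^ (n - s - Suc 0)))) / (a c ^ (n-s) * a c ^ (n-s))) (at (a c))"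
      by (rule DERIV_divide[OF dPi dpow]) (simp add: acnz)
    hence "((\<lambda>x. Pi x / x^(n-s)) has_field_derivative Q / a c ^ (n-s)) (at (a c))"
      using Pi0[OF c] acnz by simp
    hence "((\<lambda>x. us - (-1)^s * (Pi x / x^(n-s))) has_field_derivative 0 - (-1)^s * (Q / a c ^ (n-s))) (at (a c))"
      by (intro DERIV_diff DERIV_const DERIV_cmult)
    moreover have "\<phi> = (\<lambda>x. us - (-1)^s * (Pi x / x^(n-s)))" by (simp add: \<phi>_def fun_eq_iff)
    ultimately have "(\<phi> has_field_derivative 0 - (-1)^s * (Q / a c ^ (n-s))) (at (a c))" by simp
    hence "deriv \<phi> (a c) = 0 - (-1)^s * (Q / a c ^ (n-s))" by (rule DERIV_imp_deriv)
    thus ?thesis using Qnz acnz by simp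
  qed
  define PP where "PP = (\<lambda>c (r::real) (g::complex \<Rightarrow> complex). r > 0 \<and> ball (a c) r \<subseteq> ball (a c) R \<and> open (\<phi> ` ball (a c) r) \<and>
      g holomorphic_on (\<phi> ` ball (a c) r) \<and> (\<forall>z\<in>ball (a c) r. g (\<phi> z) = z))"
  have ex: "\<exists>rg. PP c (fst rg) (snd rg)" if c: "c \<in> {1..n}" for c
  proof -
    have hb: "\<phi> holomorphic_on ball (a c) R"
    proof (rule holomorphic_on_subset[OF holo])
      show "ball (a c) R \<subseteq> - {0}" using ball_nz[OF c] by blast
    qed
    obtain r where r: "r > 0" "ball (a c) r \<subseteq> ball (a c) R" "open (\<phi> ` ball (a c) r)" "inj_on \<phi> (ball (a c) r)"
    proof (rule has_complex_derivative_locally_invertible[OF hb _ _ dnz[OF c]])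
      show "a c \<in> ball (a c) R" using R by simp
    qed auto
    have hr: "\<phi> holomorphic_on ball (a c) r" using hb r(2) by (rule holomorphic_on_subset)
    obtain g where g: "g holomorphic_on (\<phi> ` ball (a c) r)" "\<And>z. z \<in> ball (a c) r \<Longrightarrow> g (\<phi> z) = z"
    proof (rule holomorphic_has_inverse[OF hr open_ball r(4)])
      fix g assume "g holomorphic_on (\<phi> ` ball (a c) r)" "\<And>z. z \<in> ball (a c) r \<Longrightarrow> g (\<phi> z) = z"
      thus thesis by (rule that)
    qed
    have "PP c r g" unfolding PP_def using r g by blast
    thus ?thesis by (intro exI[of _ "(r, g)"]) simp
  qed
  have "\<exists>F. \<forall>c\<in>{1..n}. PP c (fst (F c)) (snd (F c))" by (rule bchoice) (use ex in blast)
  then obtain F where F0: "\<forall>c\<in>{1..n}. PP c (fst (F c)) (snd (F c))" by blast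
  have F: "fst (F c) > 0" "ball (a c) (fst (F c)) \<subseteq> ball (a c) R" "open (\<phi> ` ball (a c) (fst (F c)))"
      "snd (F c) holomorphic_on (\<phi> ` ball (a c) (fst (F c)))" "\<And>z. z \<in> ball (a c) (fst (F c)) \<Longrightarrow> snd (F c) (\<phi> z) = z"
    if "c \<in> {1..n}" for c
  proof -
    have Pc: "PP c (fst (F c)) (snd (F c))" using F0 that by blast
    show "fst (F c) > 0" using Pc unfolding PP_def by blast
    show "ball (a c) (fst (F c)) \<subseteq> ball (a c) R" using Pc unfolding PP_def by blast
    show "open (\<phi> ` ball (a c) (fst (F c)))" using Pc unfolding PP_def by blast
    show "snd (F c) holomorphic_on (\<phi> ` ball (a c) (fst (F c)))" using Pc unfolding PP_def by blast
    show "\<And>z. z \<in> ball (a c) (fst (F c)) \<Longrightarrow> snd (F c) (\<phi> z) = z" using Pc unfolding PP_def by blast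
  qed
  define N where "N = (\<Inter>c\<in>{1..n}. \<phi> ` ball (a c) (fst (F c)))"
  define \<psi> where "\<psi> = (\<lambda>t c. snd (F c) t)"
  define \<psi>' where "\<psi>' = (\<lambda>c. deriv (snd (F c)) us)"
  have openN: "open N" unfolding N_def using F(3) by (intro open_INT) auto
  have usN: "us \<in> N" unfolding N_def
  proof (intro INT_I)
    fix c assume c: "c \<in> {1..n}"
    have "a c \<in> ball (a c) (fst (F c))" using F(1)[OF c] by auto
    thus "us \<in> \<phi> ` ball (a c) (fst (F c))" using phi_ac[OF c] by (intro image_eqI[where x="a c"]) auto
  qed
  have inball: "\<psi> t c \<in> ball (a c) R \<and> \<phi> (\<psi> t c) = t" if t: "t \<in> N" and c: "c \<in> {1..n}" for t c
  proof -
    obtain z where z: "z \<in> ball (a c) (fst (F c))" "t = \<phi> z" using t c unfolding N_def by blast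
    have "\<psi> t c = z" using F(5)[OF c z(1)] z(2) by (simp add: \<psi>_def)
    thus ?thesis using z F(2)[OF c] by auto
  qed
  show ?thesis
  proof (rule that[of N \<psi> \<psi>'])
    show "open N" by (rule openN)
    show "esym {1..n} s a \<in> N" using usN by (simp add: us_def)
  next
    fix t assume t: "t \<in> N"
    have d: "dist_on n (\<psi> t)" unfolding dist_on_def
    proof (intro ballI impI)
      fix i j assume "i \<in> {1..n}" "j \<in> {1..n}" "i \<noteq> j"
      thus "\<psi> t i \<noteq> \<psi> t j" using ball_disj[of i j] inball[OF t] by blast
    qed
    have z: "nzon n (\<psi> t)" unfolding nzon_def
    proof
      fix c assume c: "c \<in> {1..n}"
      show "\<psi> t c \<noteq> 0" using ball_nz[OF c] inball[OF t c] by blast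
    qed
    show "dist_on n (\<psi> t) \<and> nzon n (\<psi> t)" using d z by blast
  next
    fix t m assume t: "t \<in> N" and m: "m \<in> {1..n}"
    have dist: "dist_on n (\<psi> t)" unfolding dist_on_def
    proof (intro ballI impI)
      fix i j assume "i \<in> {1..n}" "j \<in> {1..n}" "i \<noteq> j"
      thus "\<psi> t i \<noteq> \<psi> t j" using ball_disj[of i j] inball[OF t] by blast
    qed
    have ss: "(-1::complex)^s * (-1)^s = 1" by (simp flip: power_add)
    have root: "(\<Prod>e\<in>{1..n}. \<psi> t c - a e) + (-1)^s * (t - us) * \<psi> t c ^ (n - s) = 0" if c: "c \<in> {1..n}" for c
    proof -
      let ?x = "\<psi> t c"
      have xnz: "?x \<noteq> 0" using inball[OF t c] ball_nz[OF c] by blast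
      have "us - (-1)^s * Pi ?x / ?x^(n-s) = t" using inball[OF t c] by (simp add: \<phi>_def)
      hence "(-1)^s * Pi ?x / ?x^(n-s) = us - t" by (simp add: algebra_simps)
      hence e1: "(-1)^s * (Pi ?x / ?x^(n-s)) = us - t" by (simp only: times_divide_eq_right)
      have "Pi ?x / ?x^(n-s) = ((-1)^s * (-1)^s) * (Pi ?x / ?x^(n-s))" using ss by simp
      also have "\<dots> = (-1)^s * (us - t)" using e1 by (simp only: mult.assoc)
      finally have "Pi ?x / ?x^(n-s) = (-1)^s * (us - t)" .
      hence "Pi ?x = (-1)^s * (us - t) * ?x^(n-s)" using xnz by (simp add: field_simps)
      thus ?thesis by (simp add: Pi_def algebra_simps)
    qed
    have "esym {1..n} m (\<psi> t) = esym {1..n} m a + (if m = s then t - us else 0)"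
      by (rule roots_to_esym[OF dist s root m])
    thus "esym {1..n} m (\<psi> t) = (if m = s then t else esym {1..n} m a)" by (simp add: us_def)
  next
    fix c assume c: "c \<in> {1..n}"
    have "a c \<in> ball (a c) (fst (F c))" using F(1)[OF c] by auto
    hence "snd (F c) (\<phi> (a c)) = a c" using F(5)[OF c] by blast
    thus "\<psi> (esym {1..n} s a) c = a c" using phi_ac[OF c] by (simp add: \<psi>_def us_def)
  next
    fix c assume c: "c \<in> {1..n}"
    have "us \<in> \<phi> ` ball (a c) (fst (F c))" using usN c unfolding N_def by blast
    hence "(snd (F c) has_field_derivative deriv (snd (F c)) us) (at us)"
      using F(3,4)[OF c] by (intro holomorphic_derivI[of _ "\<phi> ` ball (a c) (fst (F c))"]) auto
    thus "((\<lambda>t. \<psi> t c) has_field_derivative \<psi>' c) (at (esym {1..n} s a))"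
      by (simp add: \<psi>_def \<psi>'_def us_def)
  qed
qed



definition Tt :: "nat \<Rightarrow> (nat\<Rightarrow>complex) \<Rightarrow> nat \<Rightarrow> nat \<Rightarrow> nat \<Rightarrow> complex" where
  "Tt n a c d i = (if c \<in> {1..n} - {d} \<and> 2 \<le> i then esym ({1..n} - {d} - {c}) (i - 2) a else 0)"
definition Ad :: "nat \<Rightarrow> (nat\<Rightarrow>complex) \<Rightarrow> nat \<Rightarrow> nat \<Rightarrow> nat \<Rightarrow> complex" where
  "Ad n a s d i = (\<Sum>c\<in>{1..n}. Bmat n a s c * Tt n a c d i)"
definition DG :: "nat \<Rightarrow> (nat\<Rightarrow>complex) \<Rightarrow> nat \<Rightarrow> nat \<Rightarrow> nat \<Rightarrow> complex" where
  "DG n a s i j = (\<Sum>k\<in>{1..n}. \<Sum>l\<in>{1..n}. Cm k l * (Ad n a s k i * Amat n a l j + Amat n a k i * Ad n a s l j))"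

lemma Amat_cong: "(\<And>c. c \<in> {1..n} \<Longrightarrow> a c = b c) \<Longrightarrow> Amat n a d i = Amat n b d i"
  unfolding Amat_def by (rule esym_cong) auto
lemma Tt_cong: "(\<And>c. c \<in> {1..n} \<Longrightarrow> a c = b c) \<Longrightarrow> Tt n a c d i = Tt n b c d i"
  unfolding Tt_def by (auto intro!: esym_cong)
lemma Bmat_cong: "(\<And>c. c \<in> {1..n} \<Longrightarrow> a c = b c) \<Longrightarrow> c \<in> {1..n} \<Longrightarrow> Bmat n a k c = Bmat n b k c"
  unfolding Bmat_def by (auto intro!: prod.cong)
lemma Gm_cong: assumes "\<And>c. c \<in> {1..n} \<Longrightarrow> a c = b c" shows "Gm n a i j = Gm n b i j"
proof -
  have "Amat n a x y = Amat n b x y" for x y by (rule Amat_cong) (use assms in auto)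
  thus ?thesis unfolding Gm_sum by simp
qed
lemma Lm_cong: assumes "\<And>c. c \<in> {1..n} \<Longrightarrow> a c = b c" shows "Lm n a i j = Lm n b i j"
proof -
  have "Bmat n a x y = Bmat n b x y" if "y \<in> {1..n}" for x y by (rule Bmat_cong) (use assms that in auto)
  thus ?thesis unfolding Lm_def mm_def tr_def by (intro sum.cong refl) simp
qed

lemma A_deriv:
  assumes d\<psi>: "\<And>c. c \<in> {1..n} \<Longrightarrow> ((\<lambda>t. \<psi> t c) has_field_derivative \<psi>' c) (at t0)" and d: "d \<in> {1..n}"
  shows "((\<lambda>t. Amat n (\<psi> t) d i) has_field_derivative (\<Sum>c\<in>{1..n}. \<psi>' c * Tt n (\<psi> t0) c d i)) (at t0)"
proof (cases "2 \<le> i")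
  case False
  hence "Amat n (\<psi> t) d i = 1" for t unfolding Amat_def by (simp add: esym_0)
  moreover have "(\<Sum>c\<in>{1..n}. \<psi>' c * Tt n (\<psi> t0) c d i) = 0" using False by (simp add: Tt_def)
  ultimately show ?thesis by simp
next
  case True
  let ?J = "{1..n} - {d}"
  have e: "i - 1 = Suc (i - 2)" using True by simp
  have "((\<lambda>t. esym ?J (Suc (i - 2)) (\<psi> t)) has_field_derivative (\<Sum>c\<in>?J. \<psi>' c * esym (?J - {c}) (i - 2) (\<psi> t0))) (at t0)"
    by (rule esym_deriv) (auto intro: d\<psi>)
  moreover have "(\<Sum>c\<in>{1..n}. \<psi>' c * Tt n (\<psi> t0) c d i) = (\<Sum>c\<in>?J. \<psi>' c * esym (?J - {c}) (i - 2) (\<psi> t0))"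
  proof -
    have "(\<Sum>c\<in>{1..n}. \<psi>' c * Tt n (\<psi> t0) c d i) = (\<Sum>c\<in>{1..n}. if c \<in> ?J then \<psi>' c * esym (?J - {c}) (i - 2) (\<psi> t0) else 0)"
      using True unfolding Tt_def by (intro sum.cong refl) auto
    also have "\<dots> = (\<Sum>c\<in>?J. \<psi>' c * esym (?J - {c}) (i - 2) (\<psi> t0))"
      by (rule sum.mono_neutral_cong_right) auto
    finally show ?thesis .
  qed
  ultimately show ?thesis unfolding Amat_def e by simp
qed

lemma pd_gL:
  assumes n: "n \<ge> 2" and a: "dist_on n a" "nzon n a" and s: "s \<in> {1..n}"
    and lk: "l \<in> {1..n}" "k \<in> {1..n}" and v: "\<And>m. m \<in> {1..n} \<Longrightarrow> v m = esym {1..n} m a"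
  shows "pd (\<lambda>v. gL n v l k) v s = - mm n (Lm n a) (mm n (DG n a s) (Lm n a)) l k"
proof -
  obtain N \<psi> \<psi>' where N: "open N" "esym {1..n} s a \<in> N"
   and \<psi>N: "\<And>t. t \<in> N \<Longrightarrow> dist_on n (\<psi> t) \<and> nzon n (\<psi> t)"
   and \<psi>e: "\<And>t m. t \<in> N \<Longrightarrow> m \<in> {1..n} \<Longrightarrow> esym {1..n} m (\<psi> t) = (if m = s then t else esym {1..n} m a)"
   and \<psi>0: "\<And>c. c \<in> {1..n} \<Longrightarrow> \<psi> (esym {1..n} s a) c = a c"
   and d\<psi>: "\<And>c. c \<in> {1..n} \<Longrightarrow> ((\<lambda>t. \<psi> t c) has_field_derivative \<psi>' c) (at (esym {1..n} s a))"
    using curve[OF n a s] by blast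
  define t0 where "t0 = esym {1..n} s a"
  have evN: "eventually (\<lambda>t. t \<in> N) (nhds t0)" using N by (simp add: eventually_nhds_in_open t0_def)
  have rowA: "(\<Sum>c\<in>{1..n}. \<psi>' c * Amat n a c m) = idm s m" if m: "m \<in> {1..n}" for m
  proof -
    obtain m' where m': "m = Suc m'" using m by (cases m) auto
    have "((\<lambda>t. esym {1..n} (Suc m') (\<psi> t)) has_field_derivative (\<Sum>c\<in>{1..n}. \<psi>' c * esym ({1..n} - {c}) m' (\<psi> t0))) (at t0)"
      by (rule esym_deriv) (use d\<psi> in \<open>auto simp: t0_def\<close>)
    moreover have ev: "eventually (\<lambda>t. esym {1..n} (Suc m') (\<psi> t) = (if m = s then t else esym {1..n} m a)) (nhds t0)"
      using evN by (rule eventually_mono) (use \<psi>e m m' in auto)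
    note iff = DERIV_cong_ev[OF refl ev refl, of "\<Sum>c\<in>{1..n}. \<psi>' c * esym ({1..n} - {c}) m' (\<psi> t0)"]
    ultimately have "((\<lambda>t. if m = s then t else esym {1..n} m a) has_field_derivative (\<Sum>c\<in>{1..n}. \<psi>' c * esym ({1..n} - {c}) m' (\<psi> t0))) (at t0)"
      by simp
    moreover have "((\<lambda>t. if m = s then t else esym {1..n} m a) has_field_derivative idm s m) (at t0)"
      by (cases "m = s") (auto simp: idm_def intro!: derivative_eq_intros)
    ultimately have "(\<Sum>c\<in>{1..n}. \<psi>' c * esym ({1..n} - {c}) m' (\<psi> t0)) = idm s m" by (rule DERIV_unique)
    moreover have "esym ({1..n} - {c}) m' (\<psi> t0) = Amat n a c m" for c
    proof -
      have "esym ({1..n} - {c}) m' (\<psi> t0) = esym ({1..n} - {c}) m' a"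
        by (rule esym_cong) (use \<psi>0 in \<open>auto simp: t0_def\<close>)
      thus ?thesis unfolding Amat_def m' by simp
    qed
    ultimately show ?thesis by simp
  qed
  have \<psi>'B: "\<psi>' d = Bmat n a s d" if d: "d \<in> {1..n}" for d
  proof -
    have "Bmat n a s d = (\<Sum>m\<in>{1..n}. idm s m * Bmat n a m d)" using mm_idm_left[OF s, of "Bmat n a" d] by (simp add: mm_def)
    also have "\<dots> = (\<Sum>m\<in>{1..n}. (\<Sum>c\<in>{1..n}. \<psi>' c * Amat n a c m) * Bmat n a m d)"
    proof (intro sum.cong refl)
      fix m assume "m \<in> {1..n}"
      thus "idm s m * Bmat n a m d = (\<Sum>c\<in>{1..n}. \<psi>' c * Amat n a c m) * Bmat n a m d" using rowA by simp
    qed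
    also have "\<dots> = (\<Sum>c\<in>{1..n}. \<psi>' c * mm n (Amat n a) (Bmat n a) c d)"
      unfolding mm_def sum_distrib_right sum_distrib_left by (subst sum.swap) (simp add: mult.assoc)
    also have "\<dots> = (\<Sum>c\<in>{1..n}. \<psi>' c * idm c d)"
      using AB[OF a(1)] d by (intro sum.cong refl) (simp add: eqn_def)
    also have "\<dots> = \<psi>' d" using d by (simp add: idm_def sum.delta' if_distrib[of "\<lambda>x. _ * x"] cong: if_cong)
    finally show ?thesis by simp
  qed
  have dA: "((\<lambda>t. Amat n (\<psi> t) d i) has_field_derivative Ad n a s d i) (at t0)" if d: "d \<in> {1..n}" for d i
  proof -
    have "((\<lambda>t. Amat n (\<psi> t) d i) has_field_derivative (\<Sum>c\<in>{1..n}. \<psi>' c * Tt n (\<psi> t0) c d i)) (at t0)"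
      by (rule A_deriv[OF _ d]) (use d\<psi> in \<open>simp add: t0_def\<close>)
    moreover have "(\<Sum>c\<in>{1..n}. \<psi>' c * Tt n (\<psi> t0) c d i) = Ad n a s d i"
    proof -
      have T0: "Tt n (\<psi> t0) c d i = Tt n a c d i" for c by (rule Tt_cong) (use \<psi>0 in \<open>auto simp: t0_def\<close>)
      show ?thesis unfolding Ad_def
      proof (intro sum.cong refl)
        fix c assume "c \<in> {1..n}"
        thus "\<psi>' c * Tt n (\<psi> t0) c d i = Bmat n a s c * Tt n a c d i" using \<psi>'B T0 by simp
      qed
    qed
    ultimately show ?thesis by simp
  qed
  have A0: "Amat n (\<psi> t0) d i = Amat n a d i" for d i by (rule Amat_cong) (use \<psi>0 in \<open>auto simp: t0_def\<close>)
  have dG: "((\<lambda>t. Gm n (\<psi> t) i j) has_field_derivative DG n a s i j) (at t0)" for i j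
  proof -
    have "((\<lambda>t. \<Sum>k\<in>{1..n}. \<Sum>l\<in>{1..n}. Cm k l * Amat n (\<psi> t) k i * Amat n (\<psi> t) l j) has_field_derivative
       (\<Sum>k\<in>{1..n}. \<Sum>l\<in>{1..n}. Cm k l * Ad n a s k i * Amat n (\<psi> t0) l j + Cm k l * Amat n (\<psi> t0) k i * Ad n a s l j)) (at t0)"
      by (intro DERIV_sum) (auto intro!: derivative_eq_intros dA)
    thus ?thesis unfolding Gm_sum DG_def by (simp add: A0 algebra_simps)
  qed
  have dL: "\<exists>D. ((\<lambda>t. Lm n (\<psi> t) i j) has_field_derivative D) (at t0)" for i j
  proof -
    note [derivative_intros] = has_field_derivative_prod
    have dt0: "dist_on n (\<psi> t0)" using \<psi>N[of t0] N(2) by (simp add: t0_def)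
    have nz: "(\<Prod>e\<in>{1..n}-{c}. \<psi> t0 c - \<psi> t0 e) \<noteq> 0" if "c \<in> {1..n}" for c
      using prod_diff_nz[OF dt0 that] .
    show ?thesis unfolding Lm_def mm_def tr_def Bmat_def
      using dt0 unfolding dist_on_def
      by (intro exI) (auto intro!: derivative_eq_intros d\<psi>[folded t0_def] nz)
  qed
  define Ld where "Ld i j = (SOME D. ((\<lambda>t. Lm n (\<psi> t) i j) has_field_derivative D) (at t0))" for i j
  have dL': "((\<lambda>t. Lm n (\<psi> t) i j) has_field_derivative Ld i j) (at t0)" for i j
    unfolding Ld_def using someI_ex[OF dL] .
  have L0: "Lm n (\<psi> t0) i j = Lm n a i j" for i j by (rule Lm_cong) (use \<psi>0 in \<open>auto simp: t0_def\<close>)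
  have G0: "Gm n (\<psi> t0) i j = Gm n a i j" for i j by (rule Gm_cong) (use \<psi>0 in \<open>auto simp: t0_def\<close>)
  \<comment> \<open>Step 4: differentiate G L = I\<close>
  have prodd: "mm n (DG n a s) (Lm n a) i j + mm n (Gm n a) Ld i j = 0" if ij: "i \<in> {1..n}" "j \<in> {1..n}" for i j
  proof -
    have "((\<lambda>t. mm n (Gm n (\<psi> t)) (Lm n (\<psi> t)) i j) has_field_derivative mm n (DG n a s) (Lm n a) i j + mm n (Gm n a) Ld i j) (at t0)"
      unfolding mm_def by (auto intro!: derivative_eq_intros dG dL' simp: L0 G0 sum.distrib mult.commute)
    moreover have ev: "eventually (\<lambda>t. mm n (Gm n (\<psi> t)) (Lm n (\<psi> t)) i j = idm i j) (nhds t0)"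
      using evN by (rule eventually_mono) (use GL[OF n] \<psi>N ij in \<open>auto simp: eqn_def\<close>)
    note iff = DERIV_cong_ev[OF refl ev refl, of "mm n (DG n a s) (Lm n a) i j + mm n (Gm n a) Ld i j"]
    ultimately have "((\<lambda>t. idm i j) has_field_derivative mm n (DG n a s) (Lm n a) i j + mm n (Gm n a) Ld i j) (at t0)"
      by simp
    moreover have "((\<lambda>t. idm i j) has_field_derivative 0) (at t0)" by simp
    ultimately show ?thesis by (rule DERIV_unique)
  qed
  have LdE: "Ld l k = - mm n (Lm n a) (mm n (DG n a s) (Lm n a)) l k"
  proof -
    have "eqn n (mm n (Gm n a) Ld) (\<lambda>i j. - mm n (DG n a s) (Lm n a) i j)"
      using prodd by (simp add: eqn_def eq_neg_iff_add_eq_0 add.commute)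
    hence "eqn n (mm n (Lm n a) (mm n (Gm n a) Ld)) (mm n (Lm n a) (\<lambda>i j. - mm n (DG n a s) (Lm n a) i j))"
      by (rule eqn_mm_right)
    moreover have "eqn n (mm n (mm n (Lm n a) (Gm n a)) Ld) (mm n idm Ld)"
      by (rule eqn_mm_left[OF LG[OF n a(1)]])
    ultimately have "eqn n (mm n idm Ld) (mm n (Lm n a) (\<lambda>i j. - mm n (DG n a s) (Lm n a) i j))"
      unfolding mm_assoc by (metis eqn_trans eqn_sym)
    hence "Ld l k = mm n (Lm n a) (\<lambda>i j. - mm n (DG n a s) (Lm n a) i j) l k"
      using lk by (simp add: eqn_def mm_idm_left)
    also have "\<dots> = - mm n (Lm n a) (mm n (DG n a s) (Lm n a)) l k"
      by (simp add: mm_def sum_negf)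
    finally show ?thesis .
  qed
  have vs: "v s = t0" using v[OF s] by (simp add: t0_def)
  have "eventually (\<lambda>t. gL n (v(s := t)) l k = Lm n (\<psi> t) l k) (nhds t0)"
  proof (rule eventually_mono[OF evN])
    fix t assume t: "t \<in> N"
    show "gL n (v(s := t)) l k = Lm n (\<psi> t) l k"
    proof (rule gL_val[OF n])
      show "dist_on n (\<psi> t)" "nzon n (\<psi> t)" using \<psi>N[OF t] by auto
      fix m assume m: "m \<in> {1..n}"
      show "(v(s := t)) m = esym {1..n} m (\<psi> t)" using \<psi>e[OF t m] v[OF m] by simp
    qed (use lk in auto)
  qed
  hence "pd (\<lambda>v. gL n v l k) v s = deriv (\<lambda>t. Lm n (\<psi> t) l k) t0"
    unfolding pd_def vs by (rule deriv_cong_ev) simp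
  also have "\<dots> = Ld l k" by (rule DERIV_imp_deriv[OF dL'])
  finally show ?thesis using LdE by simp
qed



definition Vm :: "nat \<Rightarrow> (nat\<Rightarrow>complex) \<Rightarrow> nat \<Rightarrow> nat \<Rightarrow> complex" where
  "Vm n a = mm n (tr (Amat n a)) Cm"
definition Em :: "nat \<Rightarrow> (nat\<Rightarrow>complex) \<Rightarrow> nat \<Rightarrow> nat \<Rightarrow> nat \<Rightarrow> complex" where
  "Em n a c = (\<lambda>i j. mm n (mm n (tr (Tt n a c)) Cm) (Amat n a) i j + mm n (Vm n a) (Tt n a c) i j)"

lemma Tt_sym: "c \<in> {1..n} \<Longrightarrow> d \<in> {1..n} \<Longrightarrow> Tt n a c d i = Tt n a d c i"
  unfolding Tt_def by (auto simp: Diff_insert2[symmetric] insert_commute)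

lemma sum3_swap: "(\<Sum>k\<in>S. \<Sum>l\<in>T. \<Sum>c\<in>U. f k l c) = (\<Sum>c\<in>U. \<Sum>k\<in>S. \<Sum>l\<in>T. f k l c)"
proof -
  have "(\<Sum>k\<in>S. \<Sum>l\<in>T. \<Sum>c\<in>U. f k l c) = (\<Sum>k\<in>S. \<Sum>c\<in>U. \<Sum>l\<in>T. f k l c)"
    by (intro sum.cong refl) (rule sum.swap)
  also have "\<dots> = (\<Sum>c\<in>U. \<Sum>k\<in>S. \<Sum>l\<in>T. f k l c)" by (rule sum.swap)
  finally show ?thesis .
qed

lemma Em_sum: "Em n a c i j = (\<Sum>k\<in>{1..n}. \<Sum>l\<in>{1..n}. Cm k l * (Tt n a c k i * Amat n a l j + Amat n a k i * Tt n a c l j))"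
proof -
  have 1: "mm n (mm n (tr (Tt n a c)) Cm) (Amat n a) i j = (\<Sum>k\<in>{1..n}. \<Sum>l\<in>{1..n}. Cm k l * (Tt n a c k i * Amat n a l j))"
  proof -
    have "mm n (mm n (tr (Tt n a c)) Cm) (Amat n a) i j = (\<Sum>l\<in>{1..n}. \<Sum>k\<in>{1..n}. Cm k l * (Tt n a c k i * Amat n a l j))"
      unfolding mm_def tr_def by (simp add: sum_distrib_right sum_distrib_left mult_ac)
    also have "\<dots> = (\<Sum>k\<in>{1..n}. \<Sum>l\<in>{1..n}. Cm k l * (Tt n a c k i * Amat n a l j))" by (rule sum.swap)
    finally show ?thesis .
  qed
  have 2: "mm n (Vm n a) (Tt n a c) i j = (\<Sum>k\<in>{1..n}. \<Sum>l\<in>{1..n}. Cm k l * (Amat n a k i * Tt n a c l j))"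
  proof -
    have "mm n (Vm n a) (Tt n a c) i j = (\<Sum>l\<in>{1..n}. \<Sum>k\<in>{1..n}. Cm k l * (Amat n a k i * Tt n a c l j))"
      unfolding Vm_def mm_def tr_def by (simp add: sum_distrib_right sum_distrib_left mult_ac)
    also have "\<dots> = (\<Sum>k\<in>{1..n}. \<Sum>l\<in>{1..n}. Cm k l * (Amat n a k i * Tt n a c l j))" by (rule sum.swap)
    finally show ?thesis .
  qed
  show ?thesis unfolding Em_def 1 2 by (simp add: sum.distrib distrib_left)
qed

lemma DG_expand: "DG n a x i j = (\<Sum>c\<in>{1..n}. Bmat n a x c * Em n a c i j)"
proof -
  have "DG n a x i j = (\<Sum>k\<in>{1..n}. \<Sum>l\<in>{1..n}. \<Sum>c\<in>{1..n}. Bmat n a x c * (Cm k l * (Tt n a c k i * Amat n a l j + Amat n a k i * Tt n a c l j)))"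
    unfolding DG_def Ad_def
    by (intro sum.cong refl) (simp add: sum_distrib_left sum_distrib_right algebra_simps sum.distrib)
  also have "\<dots> = (\<Sum>c\<in>{1..n}. \<Sum>k\<in>{1..n}. \<Sum>l\<in>{1..n}. Bmat n a x c * (Cm k l * (Tt n a c k i * Amat n a l j + Amat n a k i * Tt n a c l j)))"
    by (rule sum3_swap)
  also have "\<dots> = (\<Sum>c\<in>{1..n}. Bmat n a x c * Em n a c i j)"
    unfolding Em_sum by (simp add: sum_distrib_left)
  finally show ?thesis .
qed

lemma Em_alt: "Em n a d i s = (\<Sum>m\<in>{1..n}. Tt n a d m i * Vm n a s m) + (\<Sum>l\<in>{1..n}. Vm n a i l * Tt n a d l s)"
proof -
  have 1: "mm n (mm n (tr (Tt n a d)) Cm) (Amat n a) i s = (\<Sum>m\<in>{1..n}. Tt n a d m i * Vm n a s m)"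
  proof -
    have "mm n (mm n (tr (Tt n a d)) Cm) (Amat n a) i s = (\<Sum>l\<in>{1..n}. \<Sum>m\<in>{1..n}. Tt n a d m i * (Cm m l * Amat n a l s))"
      unfolding mm_def tr_def by (simp add: sum_distrib_right sum_distrib_left mult_ac)
    also have "\<dots> = (\<Sum>m\<in>{1..n}. \<Sum>l\<in>{1..n}. Tt n a d m i * (Cm m l * Amat n a l s))" by (rule sum.swap)
    also have "\<dots> = (\<Sum>m\<in>{1..n}. Tt n a d m i * Vm n a s m)"
      unfolding Vm_def mm_def tr_def sum_distrib_left by (intro sum.cong refl) (simp add: Cm_def)
    finally show ?thesis .
  qed
  have 2: "mm n (Vm n a) (Tt n a d) i s = (\<Sum>l\<in>{1..n}. Vm n a i l * Tt n a d l s)"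
    by (simp add: mm_def)
  show ?thesis unfolding Em_def 1 2 ..
qed

lemma mm_add_left: "mm n (\<lambda>i j. X i j + Y i j) Z i j = mm n X Z i j + mm n Y Z i j"
  by (simp add: mm_def distrib_right sum.distrib)

lemma Gm_Vm: "Gm n a = mm n (Vm n a) (Amat n a)" by (simp add: Gm_def Vm_def)

lemma GB: assumes "dist_on n a" "c \<in> {1..n}" shows "mm n (Gm n a) (Bmat n a) x c = Vm n a x c"
proof -
  have "mm n (Gm n a) (Bmat n a) x c = mm n (Vm n a) (mm n (Amat n a) (Bmat n a)) x c" by (simp add: Gm_Vm mm_assoc)
  also have "\<dots> = mm n (Vm n a) idm x c" by (rule mm_cong_right[OF AB[OF assms(1)] assms(2)])
  also have "\<dots> = Vm n a x c" by (rule mm_idm_right[OF assms(2)])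
  finally show ?thesis .
qed

lemma CAL: assumes "n \<ge> 2" "dist_on n a" shows "eqn n (mm n Cm (mm n (Amat n a) (Lm n a))) (tr (Bmat n a))"
proof -
  have "mm n (Amat n a) (Lm n a) = mm n (Amat n a) (mm n (Bmat n a) (mm n (Ci n) (tr (Bmat n a))))"
    by (simp add: Lm_def mm_assoc)
  hence "eqn n (mm n (Amat n a) (Lm n a)) (mm n (Ci n) (tr (Bmat n a)))"
    using mm_cancel[OF AB[OF assms(2)]] by simp
  hence "eqn n (mm n Cm (mm n (Amat n a) (Lm n a))) (mm n Cm (mm n (Ci n) (tr (Bmat n a))))"
    by (rule eqn_mm_right)
  moreover have "eqn n (mm n Cm (mm n (Ci n) (tr (Bmat n a)))) (tr (Bmat n a))"
    by (rule mm_cancel[OF CCi[OF assms(1)]])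
  ultimately show ?thesis by (rule eqn_trans)
qed

lemma EL: assumes "n \<ge> 2" "dist_on n a" "k \<in> {1..n}"
  shows "mm n (Em n a c) (Lm n a) y k = (\<Sum>d\<in>{1..n}. Tt n a c d y * Bmat n a k d) + mm n (Vm n a) (mm n (Tt n a c) (Lm n a)) y k"
proof -
  have "mm n (Em n a c) (Lm n a) y k = mm n (mm n (mm n (tr (Tt n a c)) Cm) (Amat n a)) (Lm n a) y k + mm n (mm n (Vm n a) (Tt n a c)) (Lm n a) y k"
    unfolding Em_def by (rule mm_add_left)
  also have "mm n (mm n (mm n (tr (Tt n a c)) Cm) (Amat n a)) (Lm n a) y k = mm n (tr (Tt n a c)) (mm n Cm (mm n (Amat n a) (Lm n a))) y k"
    by (simp add: mm_assoc)
  also have "\<dots> = mm n (tr (Tt n a c)) (tr (Bmat n a)) y k"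
    by (rule mm_cong_right[OF CAL[OF assms(1,2)] assms(3)])
  also have "\<dots> = (\<Sum>d\<in>{1..n}. Tt n a c d y * Bmat n a k d)" by (simp add: mm_def tr_def)
  finally show ?thesis by (simp add: mm_assoc)
qed

lemma GLX: assumes "n \<ge> 2" "dist_on n a" "i \<in> {1..n}"
  shows "(\<Sum>l\<in>{1..n}. Gm n a i l * mm n (Lm n a) X l k) = X i k"
proof -
  have "(\<Sum>l\<in>{1..n}. Gm n a i l * mm n (Lm n a) X l k) = mm n (mm n (Gm n a) (Lm n a)) X i k"
    by (simp add: mm_assoc mm_def)
  also have "\<dots> = mm n idm X i k" by (rule mm_cong_left[OF GL[OF assms(1,2)] assms(3)])
  also have "\<dots> = X i k" by (rule mm_idm_left[OF assms(3)])
  finally show ?thesis .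
qed

lemma XLG: assumes "n \<ge> 2" "dist_on n a" "s \<in> {1..n}"
  shows "(\<Sum>j\<in>{1..n}. mm n X (Lm n a) i j * Gm n a j s) = X i s"
proof -
  have "(\<Sum>j\<in>{1..n}. mm n X (Lm n a) i j * Gm n a j s) = mm n X (mm n (Lm n a) (Gm n a)) i s"
    by (simp add: mm_assoc[symmetric] mm_def)
  also have "\<dots> = mm n X idm i s" by (rule mm_cong_right[OF LG[OF assms(1,2)] assms(3)])
  also have "\<dots> = X i s" by (rule mm_idm_right[OF assms(3)])
  finally show ?thesis .
qed

lemma Gm_symm: "Gm n a x y = Gm n a y x"
  using fun_cong[OF fun_cong[OF Gm_sym[of n a]], of y x] by (simp add: tr_def)

lemma GamC_formula:
  assumes n: "n \<ge> 2" and a: "dist_on n a" "nzon n a" and s: "s \<in> {1..n}" and i: "i \<in> {1..n}" and k: "k \<in> {1..n}"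
    and u: "\<And>m. m \<in> {1..n} \<Longrightarrow> u m = esym {1..n} m a"
  shows "GamC n s i k u = (\<Sum>c\<in>{1..n}. Vm n a s c * (\<Sum>d\<in>{1..n}. Tt n a c d i * Bmat n a k d))"
proof -
  define G where "G = Gm n a"
  define L where "L = Lm n a"
  define V where "V = Vm n a"
  define M where "M x = mm n (DG n a x) L" for x
  define X where "X x y = (\<Sum>c\<in>{1..n}. V x c * (\<Sum>d\<in>{1..n}. Tt n a c d y * Bmat n a k d))" for x y
  define Y where "Y x y = (\<Sum>c\<in>{1..n}. V x c * mm n V (mm n (Tt n a c) L) y k)" for x y
  have gU: "gU n x y u = G x y" if "x \<in> {1..n}" "y \<in> {1..n}" for x y
    unfolding G_def by (rule gU_val[OF a u that])
  have pdL: "pd (\<lambda>v. gL n v y z) u x = - mm n L (M x) y z" if "x \<in> {1..n}" "y \<in> {1..n}" "z \<in> {1..n}" for x y z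
    unfolding L_def M_def by (rule pd_gL[OF n a that u])
  have Mexp: "M j y k = (\<Sum>c\<in>{1..n}. Bmat n a j c * mm n (Em n a c) L y k)" for j y
  proof -
    have "M j y k = (\<Sum>b\<in>{1..n}. \<Sum>c\<in>{1..n}. Bmat n a j c * (Em n a c y b * L b k))"
      unfolding M_def mm_def DG_expand by (simp add: sum_distrib_right sum_distrib_left mult_ac)
    also have "\<dots> = (\<Sum>c\<in>{1..n}. Bmat n a j c * mm n (Em n a c) L y k)"
      unfolding mm_def by (subst sum.swap) (simp add: sum_distrib_left)
    finally show ?thesis .
  qed
  have Phi: "(\<Sum>j\<in>{1..n}. G x j * M j y k) = X x y + Y x y" for x y
  proof -
    have "(\<Sum>j\<in>{1..n}. G x j * M j y k) = (\<Sum>j\<in>{1..n}. \<Sum>c\<in>{1..n}. G x j * Bmat n a j c * mm n (Em n a c) L y k)"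
      unfolding Mexp by (simp add: sum_distrib_left mult.assoc)
    also have "\<dots> = (\<Sum>c\<in>{1..n}. mm n G (Bmat n a) x c * mm n (Em n a c) L y k)"
      unfolding mm_def by (subst sum.swap) (simp add: sum_distrib_right)
    also have "\<dots> = (\<Sum>c\<in>{1..n}. V x c * mm n (Em n a c) L y k)"
      unfolding G_def V_def by (intro sum.cong refl) (simp add: GB[OF a(1)])
    also have "\<dots> = (\<Sum>c\<in>{1..n}. V x c * ((\<Sum>d\<in>{1..n}. Tt n a c d y * Bmat n a k d) + mm n V (mm n (Tt n a c) L) y k))"
      unfolding L_def V_def by (intro sum.cong refl) (simp add: EL[OF n a(1) k])
    also have "\<dots> = X x y + Y x y" by (simp add: X_def Y_def distrib_left sum.distrib)
    finally show ?thesis .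
  qed
  have TL: "mm n (Tt n a c) L e k = mm n (Tt n a e) L c k" if "c \<in> {1..n}" "e \<in> {1..n}" for c e
    unfolding mm_def using that by (intro sum.cong refl) (simp add: Tt_sym)
  have Ysym: "Y x y = Y y x" for x y
  proof -
    have "Y x y = (\<Sum>c\<in>{1..n}. \<Sum>e\<in>{1..n}. V x c * V y e * mm n (Tt n a c) L e k)"
      unfolding Y_def mm_def by (simp add: sum_distrib_left mult.assoc)
    also have "\<dots> = (\<Sum>e\<in>{1..n}. \<Sum>c\<in>{1..n}. V x c * V y e * mm n (Tt n a c) L e k)" by (rule sum.swap)
    also have "\<dots> = (\<Sum>e\<in>{1..n}. \<Sum>c\<in>{1..n}. V y e * V x c * mm n (Tt n a e) L c k)"
      by (intro sum.cong refl) (simp add: TL mult.commute)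
    also have "\<dots> = Y y x"
      unfolding Y_def mm_def by (simp add: sum_distrib_left mult.assoc)
    finally show ?thesis .
  qed
  have DGk: "DG n a k y x = X x y + X y x" for x y
  proof -
    have "DG n a k y x = (\<Sum>d\<in>{1..n}. Bmat n a k d * ((\<Sum>m\<in>{1..n}. Tt n a d m y * V x m) + (\<Sum>l\<in>{1..n}. V y l * Tt n a d l x)))"
      unfolding DG_expand Em_alt V_def ..
    also have "\<dots> = (\<Sum>d\<in>{1..n}. \<Sum>m\<in>{1..n}. V x m * (Tt n a d m y * Bmat n a k d)) + (\<Sum>d\<in>{1..n}. \<Sum>l\<in>{1..n}. V y l * (Tt n a d l x * Bmat n a k d))"
      by (simp add: distrib_left sum.distrib sum_distrib_left mult_ac)
    also have "(\<Sum>d\<in>{1..n}. \<Sum>m\<in>{1..n}. V x m * (Tt n a d m y * Bmat n a k d)) = X x y"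
      unfolding X_def sum_distrib_left
      by (subst sum.swap) (intro sum.cong refl, simp add: Tt_sym)
    also have "(\<Sum>d\<in>{1..n}. \<Sum>l\<in>{1..n}. V y l * (Tt n a d l x * Bmat n a k d)) = X y x"
      unfolding X_def sum_distrib_left
      by (subst sum.swap) (intro sum.cong refl, simp add: Tt_sym)
    finally show ?thesis .
  qed
  have inner: "(\<Sum>l\<in>{1..n}. G i l * (pd (\<lambda>v. gL n v l k) u j + pd (\<lambda>v. gL n v l j) u k - pd (\<lambda>v. gL n v j k) u l))
      = - M j i k - M k i j + (\<Sum>l\<in>{1..n}. G i l * mm n L (M l) j k)" if j: "j \<in> {1..n}" for j
  proof -
    have "(\<Sum>l\<in>{1..n}. G i l * (pd (\<lambda>v. gL n v l k) u j + pd (\<lambda>v. gL n v l j) u k - pd (\<lambda>v. gL n v j k) u l))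
       = (\<Sum>l\<in>{1..n}. - (G i l * mm n L (M j) l k) - G i l * mm n L (M k) l j + G i l * mm n L (M l) j k)"
    proof (intro sum.cong refl)
      fix l assume l: "l \<in> {1..n}"
      show "G i l * (pd (\<lambda>v. gL n v l k) u j + pd (\<lambda>v. gL n v l j) u k - pd (\<lambda>v. gL n v j k) u l)
         = - (G i l * mm n L (M j) l k) - G i l * mm n L (M k) l j + G i l * mm n L (M l) j k"
        using pdL[OF j l k] pdL[OF k l j] pdL[OF l j k] by (simp add: algebra_simps)
    qed
    also have "\<dots> = - (\<Sum>l\<in>{1..n}. G i l * mm n L (M j) l k) - (\<Sum>l\<in>{1..n}. G i l * mm n L (M k) l j) + (\<Sum>l\<in>{1..n}. G i l * mm n L (M l) j k)"
      by (simp add: sum.distrib sum_subtractf sum_negf)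
    also have "(\<Sum>l\<in>{1..n}. G i l * mm n L (M j) l k) = M j i k" unfolding G_def L_def by (rule GLX[OF n a(1) i])
    also have "(\<Sum>l\<in>{1..n}. G i l * mm n L (M k) l j) = M k i j" unfolding G_def L_def by (rule GLX[OF n a(1) i])
    finally show ?thesis .
  qed
  have "GamC n s i k u = - (\<Sum>j\<in>{1..n}. G s j * ((1/2) * (- M j i k - M k i j + (\<Sum>l\<in>{1..n}. G i l * mm n L (M l) j k))))"
    unfolding GamC_def Gam_def
  proof (intro arg_cong[where f=uminus] sum.cong refl)
    fix j assume j: "j \<in> {1..n}"
    have "(\<Sum>l = 1..n. gU n i l u * (pd (\<lambda>v. gL n v l k) u j + pd (\<lambda>v. gL n v l j) u k - pd (\<lambda>v. gL n v j k) u l))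
        = (\<Sum>l\<in>{1..n}. G i l * (pd (\<lambda>v. gL n v l k) u j + pd (\<lambda>v. gL n v l j) u k - pd (\<lambda>v. gL n v j k) u l))"
      by (intro sum.cong refl) (simp add: gU[OF i])
    thus "gU n s j u * (1 / 2 * (\<Sum>l = 1..n. gU n i l u * (pd (\<lambda>v. gL n v l k) u j + pd (\<lambda>v. gL n v l j) u k - pd (\<lambda>v. gL n v j k) u l)))
        = G s j * (1 / 2 * (- M j i k - M k i j + (\<Sum>l\<in>{1..n}. G i l * mm n L (M l) j k)))"
      using inner[OF j] gU[OF s j] by simp
  qed
  also have "\<dots> = (1/2) * ((\<Sum>j\<in>{1..n}. G s j * M j i k) + (\<Sum>j\<in>{1..n}. G s j * M k i j) - (\<Sum>j\<in>{1..n}. G s j * (\<Sum>l\<in>{1..n}. G i l * mm n L (M l) j k)))"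
    by (simp add: sum_distrib_left sum.distrib sum_subtractf sum_negf algebra_simps)
  also have "(\<Sum>j\<in>{1..n}. G s j * M k i j) = DG n a k i s"
  proof -
    have "(\<Sum>j\<in>{1..n}. G s j * M k i j) = (\<Sum>j\<in>{1..n}. mm n (DG n a k) (Lm n a) i j * Gm n a j s)"
      unfolding G_def M_def L_def by (intro sum.cong refl) (simp add: Gm_symm[of n a s] mult.commute)
    also have "\<dots> = DG n a k i s" by (rule XLG[OF n a(1) s])
    finally show ?thesis .
  qed
  also have "(\<Sum>j\<in>{1..n}. G s j * (\<Sum>l\<in>{1..n}. G i l * mm n L (M l) j k)) = (\<Sum>l\<in>{1..n}. G i l * M l s k)"
  proof -
    have "(\<Sum>j\<in>{1..n}. G s j * (\<Sum>l\<in>{1..n}. G i l * mm n L (M l) j k)) = (\<Sum>l\<in>{1..n}. G i l * (\<Sum>j\<in>{1..n}. G s j * mm n L (M l) j k))"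
      by (simp add: sum_distrib_left mult_ac) (rule sum.swap)
    also have "\<dots> = (\<Sum>l\<in>{1..n}. G i l * M l s k)"
      unfolding G_def L_def
    proof (intro sum.cong refl)
      fix l
      show "Gm n a i l * (\<Sum>j\<in>{1..n}. Gm n a s j * mm n (Lm n a) (M l) j k) = Gm n a i l * M l s k"
        using GLX[OF n a(1) s, of "M l" k] by simp
    qed
    finally show ?thesis .
  qed
  also have "(\<Sum>j\<in>{1..n}. G s j * M j i k) = X s i + Y s i" by (rule Phi)
  also have "(\<Sum>l\<in>{1..n}. G i l * M l s k) = X i s + Y i s" by (rule Phi)
  also have "DG n a k i s = X s i + X i s" by (rule DGk)
  finally have "GamC n s i k u = (1/2) * (X s i + Y s i + (X s i + X i s) - (X i s + Y i s))" .
  also have "\<dots> = X s i" using Ysym[of s i] by (simp add: field_simps)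
  finally show ?thesis by (simp add: X_def V_def)
qed



definition DDs :: "nat \<Rightarrow> nat \<Rightarrow> (nat \<Rightarrow> complex) \<Rightarrow> complex" where
  "DDs n m a = (\<Sum>d\<in>{1..n}. a d ^ m / (\<Prod>e\<in>{1..n}-{d}. a d - a e))"

lemma DD_low: assumes a: "dist_on n a" and m: "m < n"
  shows "DDs n m a = (if m = n - 1 then 1 else 0)"
proof -
  define k' where "k' = n - m"
  have k': "k' \<in> {1..n}" "n - k' = m" using m by (auto simp: k'_def)
  have one: "1 \<in> {1..n}" using m by auto
  have "mm n (Bmat n a) (Amat n a) k' 1 = idm k' 1" using BA[OF a] k' one by (simp add: eqn_def)
  moreover have "mm n (Bmat n a) (Amat n a) k' 1 = (-1)^(k'-1) * DDs n m a"
  proof -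
    have "Amat n a d 1 = 1" for d by (simp add: Amat_def esym_0)
    hence "mm n (Bmat n a) (Amat n a) k' 1 = (\<Sum>d\<in>{1..n}. (-1)^(k'-1) * (a d ^ m / (\<Prod>e\<in>{1..n}-{d}. a d - a e)))"
      unfolding mm_def Bmat_def using k' by simp
    thus ?thesis by (simp add: DDs_def sum_distrib_left)
  qed
  ultimately have e: "(-1)^(k'-1) * DDs n m a = idm k' 1" by simp
  show ?thesis
  proof (cases "m = n - 1")
    case True hence "k' = 1" using m by (simp add: k'_def)
    thus ?thesis using e True by (simp add: idm_def)
  next
    case False hence "k' \<noteq> 1" using m by (auto simp: k'_def)
    thus ?thesis using e False by (simp add: idm_def)
  qed
qed

lemma power_n_red: assumes "d \<in> {1..n}"
  shows "a d ^ n = - (\<Sum>j<n. (-1)^(n-j) * esym {1..n} (n-j) a * a d ^ j)"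
proof -
  have z: "(\<Prod>c\<in>{1..n}. a d - a c) = 0" using assms by (intro prod_zero) auto
  have v: "(\<Prod>c\<in>{1..n}. a d - a c) = (\<Sum>j\<le>n. (-1)^(n - j) * esym {1..n} (n - j) a * a d ^ j)"
    using vieta_fun[of "{1..n}" "a d" a] by simp
  have "(\<Sum>j\<le>n. (-1)^(n - j) * esym {1..n} (n - j) a * a d ^ j) = 0" using z unfolding v .
  hence "(\<Sum>j<n. (-1)^(n - j) * esym {1..n} (n - j) a * a d ^ j) + a d ^ n = 0"
    by (simp add: lessThan_Suc_atMost[symmetric] esym_0)
  thus ?thesis by (simp add: eq_neg_iff_add_eq_0 add.commute)
qed

lemma DD_rec: assumes m: "n \<le> m"
  shows "DDs n m a = - (\<Sum>j<n. (-1)^(n-j) * esym {1..n} (n-j) a * DDs n (m - n + j) a)"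
proof -
  have pw: "a d ^ m = - (\<Sum>j<n. (-1)^(n-j) * esym {1..n} (n-j) a * a d ^ (m - n + j))" if d: "d \<in> {1..n}" for d
  proof -
    have "a d ^ m = a d ^ (m - n) * a d ^ n" using m by (simp flip: power_add)
    also have "\<dots> = - (\<Sum>j<n. (-1)^(n-j) * esym {1..n} (n-j) a * (a d ^ (m - n) * a d ^ j))"
      by (simp add: power_n_red[OF d] sum_distrib_left mult_ac)
    also have "\<dots> = - (\<Sum>j<n. (-1)^(n-j) * esym {1..n} (n-j) a * a d ^ (m - n + j))"
      by (simp add: power_add)
    finally show ?thesis .
  qed
  have "DDs n m a = (\<Sum>d\<in>{1..n}. - (\<Sum>j<n. (-1)^(n-j) * esym {1..n} (n-j) a * (a d ^ (m - n + j) / (\<Prod>e\<in>{1..n}-{d}. a d - a e))))"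
    unfolding DDs_def by (intro sum.cong refl) (simp add: pw sum_divide_distrib)
  also have "\<dots> = - (\<Sum>j<n. (-1)^(n-j) * esym {1..n} (n-j) a * DDs n (m - n + j) a)"
    unfolding DDs_def by (simp add: sum_negf sum_distrib_left) (rule sum.swap)
  finally show ?thesis .
qed

lemma DD_pol: assumes n: "n \<ge> 2"
  shows "\<exists>P. P \<in> Pol {1..n} (m + 1 - n) \<and> (m + 1 < n \<longrightarrow> (\<forall>a. P a = 0)) \<and> (\<forall>a. dist_on n a \<longrightarrow> DDs n m a = P a)"
proof (induction m rule: less_induct)
  case (less m)
  have fin: "finite {1..n::nat}" by simp
  show ?case
  proof (cases "m < n")
    case True
    define c where "c = (if m = n - 1 then 1 else (0::complex))"
    have "(\<lambda>a. c) \<in> Pol {1..n} (m + 1 - n)" by (rule Pol_const[OF fin])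
    moreover have "m + 1 < n \<longrightarrow> (\<forall>a. c = 0)" by (auto simp: c_def)
    moreover have "\<forall>a. dist_on n a \<longrightarrow> DDs n m a = c"
    proof (intro allI impI)
      fix a assume "dist_on n a" thus "DDs n m a = c" using DD_low[OF _ True] by (simp add: c_def)
    qed
    ultimately show ?thesis by (intro exI[of _ "\<lambda>a. c"]) simp
  next
    case False
    hence mn: "n \<le> m" by simp
    have IH: "\<exists>P. P \<in> Pol {1..n} (m - n + j + 1 - n) \<and> (m - n + j + 1 < n \<longrightarrow> (\<forall>a. P a = 0)) \<and> (\<forall>a. dist_on n a \<longrightarrow> DDs n (m - n + j) a = P a)"
      if "j < n" for j by (rule less) (use that mn n in simp)
    define Q where "Q j = (SOME P. P \<in> Pol {1..n} (m - n + j + 1 - n) \<and> (m - n + j + 1 < n \<longrightarrow> (\<forall>a. P a = 0)) \<and> (\<forall>a. dist_on n a \<longrightarrow> DDs n (m - n + j) a = P a))" for j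
    have Q: "Q j \<in> Pol {1..n} (m - n + j + 1 - n) \<and> (m - n + j + 1 < n \<longrightarrow> (\<forall>a. Q j a = 0)) \<and> (\<forall>a. dist_on n a \<longrightarrow> DDs n (m - n + j) a = Q j a)"
      if "j < n" for j unfolding Q_def by (rule someI_ex[OF IH[OF that]])
    define P where "P a = - (\<Sum>j<n. (-1)^(n-j) * esym {1..n} (n-j) a * Q j a)" for a
    have trm: "(\<lambda>a. (-1)^(n-j) * esym {1..n} (n-j) a * Q j a) \<in> Pol {1..n} (m + 1 - n)" if j: "j < n" for j
    proof (cases "m - n + j + 1 < n")
      case True
      hence "(\<lambda>a. (-1)^(n-j) * esym {1..n} (n-j) a * Q j a) = (\<lambda>a. 0)" using Q[OF j] by (intro ext) simp
      thus ?thesis using Pol_const[OF fin] by simp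
    next
      case False
      have "(\<lambda>a. esym {1..n} (n-j) a * Q j a) \<in> Pol {1..n} ((n - j) + (m - n + j + 1 - n))"
        by (rule Pol_mult[OF fin Pol_esym[OF fin] ]) (use Q[OF j] in auto)
      moreover have "(n - j) + (m - n + j + 1 - n) = m + 1 - n" using False j mn by simp
      ultimately show ?thesis using Pol_scale[of _ "{1..n}" _ "(-1)^(n-j)"] by (simp add: mult.assoc)
    qed
    have "P \<in> Pol {1..n} (m + 1 - n)" unfolding P_def
      by (rule Pol_neg[OF Pol_sum[OF fin]]) (use trm in auto)
    moreover have "m + 1 < n \<longrightarrow> (\<forall>a. P a = 0)" using mn by simp
    moreover have "\<forall>a. dist_on n a \<longrightarrow> DDs n m a = P a"
    proof (intro allI impI)
      fix a assume "dist_on n a"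
      have "(\<Sum>j<n. (-1)^(n-j) * esym {1..n} (n-j) a * DDs n (m - n + j) a) = (\<Sum>j<n. (-1)^(n-j) * esym {1..n} (n-j) a * Q j a)"
      proof (intro sum.cong refl)
        fix j assume "j \<in> {..<n}"
        thus "(-1)^(n-j) * esym {1..n} (n-j) a * DDs n (m - n + j) a = (-1)^(n-j) * esym {1..n} (n-j) a * Q j a"
          using Q[of j] \<open>dist_on n a\<close> by simp
      qed
      thus "DDs n m a = P a" unfolding DD_rec[OF mn] P_def by simp
    qed
    ultimately show ?thesis by (intro exI[of _ P]) simp
  qed
qed



lemma unpeel: assumes "finite J" "d \<notin> J"
  shows "esym J y a = (\<Sum>q\<le>y. (- a d)^q * esym (insert d J) (y - q) a)"
proof (induction y)
  case 0 thus ?case using assms by (simp add: esym_0)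
next
  case (Suc y)
  have "esym J (Suc y) a = esym (insert d J) (Suc y) a - a d * esym J y a"
    using esym_insert[OF assms, of y a] by simp
  also have "\<dots> = esym (insert d J) (Suc y) a + (\<Sum>q\<le>y. (- a d)^(Suc q) * esym (insert d J) (y - q) a)"
    unfolding Suc by (simp add: sum_distrib_left mult_ac sum_negf[symmetric])
  also have "\<dots> = (\<Sum>q\<le>Suc y. (- a d)^q * esym (insert d J) (Suc y - q) a)"
    by (subst sum.atMost_Suc_shift) simp
  finally show ?case .
qed

context
  fixes n s i :: nat
begin

definition Yf :: "(nat \<Rightarrow> complex) \<Rightarrow> complex" where
  "Yf b = (\<Sum>e\<in>{1..n}. esym ({1..n} - {e}) (s - 1) b)"
definition Vf :: "nat \<Rightarrow> (nat \<Rightarrow> complex) \<Rightarrow> complex" where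
  "Vf c b = 4 * (Yf b - esym ({1..n} - {c}) (s - 1) b)"
definition Pr :: "nat \<Rightarrow> (nat \<Rightarrow> complex) \<Rightarrow> complex" where
  "Pr r b = (\<Sum>c\<in>{1..n}. Vf c b * esym ({1..n} - {c}) r b)"
definition Ed :: "nat \<Rightarrow> (nat \<Rightarrow> complex) \<Rightarrow> complex" where
  "Ed m b = (\<Sum>q\<le>m. (- b 0)^q * esym {1..n} (m - q) b)"
definition Ff :: "(nat \<Rightarrow> complex) \<Rightarrow> complex" where
  "Ff b = (\<Sum>q\<le>i-2. (- b 0)^q * (Pr (i - 2 - q) b - 4 * (Yf b - Ed (s - 1) b) * Ed (i - 2 - q) b))"

lemma Vm_Vf: assumes "c \<in> {1..n}" shows "Vm n a s c = Vf c a"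
proof -
  have "Vm n a s c = (\<Sum>e\<in>{1..n}. Amat n a e s * Cm e c)" by (simp add: Vm_def mm_def tr_def)
  also have "\<dots> = (\<Sum>e\<in>{1..n}. 4 * Amat n a e s) - 4 * Amat n a c s"
    using assms by (simp add: sum.remove[of _ c] Cm_def sum_distrib_left[symmetric] algebra_simps
        sum.cong[of "{1..n} - {c}" _ _ "\<lambda>e. 4 * Amat n a e s"])
  also have "\<dots> = Vf c a" by (simp add: Vf_def Yf_def Amat_def sum_distrib_left algebra_simps)
  finally show ?thesis .
qed

lemma upd0_esym: "J \<subseteq> {1..n} \<Longrightarrow> esym J r (a(0 := x)) = esym J r a"
  by (rule esym_cong) auto

lemma Yf_upd: "Yf (a(0 := x)) = Yf a" unfolding Yf_def by (intro sum.cong refl upd0_esym) auto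
lemma Vf_upd: "Vf c (a(0 := x)) = Vf c a" unfolding Vf_def Yf_upd by (simp add: upd0_esym)
lemma Pr_upd: "Pr r (a(0 := x)) = Pr r a" unfolding Pr_def by (intro sum.cong refl) (simp add: Vf_upd upd0_esym)

lemma Ed_eq: assumes "d \<in> {1..n}" shows "Ed m (a(0 := a d)) = esym ({1..n} - {d}) m a"
proof -
  have "esym ({1..n} - {d}) m a = (\<Sum>q\<le>m. (- a d)^q * esym (insert d ({1..n} - {d})) (m - q) a)"
    by (rule unpeel) auto
  also have "insert d ({1..n} - {d}) = {1..n}" using assms by auto
  finally show ?thesis unfolding Ed_def by (simp add: upd0_esym)
qed

lemma W_eq: assumes d: "d \<in> {1..n}" and i2: "2 \<le> i"
  shows "(\<Sum>c\<in>{1..n}. Vm n a s c * Tt n a c d i) = Ff (a(0 := a d))"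
proof -
  let ?y = "i - 2"
  have "(\<Sum>c\<in>{1..n}. Vm n a s c * Tt n a c d i) = (\<Sum>c\<in>{1..n}-{d}. Vf c a * esym ({1..n} - {d} - {c}) ?y a)"
  proof (rule sum.mono_neutral_cong_right)
    show "\<forall>c\<in>{1..n} - ({1..n} - {d}). Vm n a s c * Tt n a c d i = 0" by (auto simp: Tt_def)
    fix c assume "c \<in> {1..n} - {d}"
    thus "Vm n a s c * Tt n a c d i = Vf c a * esym ({1..n} - {d} - {c}) ?y a"
      using i2 by (simp add: Vm_Vf Tt_def)
  qed auto
  also have "\<dots> = (\<Sum>c\<in>{1..n}-{d}. \<Sum>q\<le>?y. (- a d)^q * (Vf c a * esym ({1..n} - {c}) (?y - q) a))"
  proof (intro sum.cong refl)
    fix c assume c: "c \<in> {1..n} - {d}"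
    have "esym ({1..n} - {d} - {c}) ?y a = (\<Sum>q\<le>?y. (- a d)^q * esym (insert d ({1..n} - {d} - {c})) (?y - q) a)"
      by (rule unpeel) auto
    also have "insert d ({1..n} - {d} - {c}) = {1..n} - {c}" using c d by auto
    finally show "Vf c a * esym ({1..n} - {d} - {c}) ?y a = (\<Sum>q\<le>?y. (- a d)^q * (Vf c a * esym ({1..n} - {c}) (?y - q) a))"
      by (simp add: sum_distrib_left mult_ac)
  qed
  also have "\<dots> = (\<Sum>q\<le>?y. (- a d)^q * (\<Sum>c\<in>{1..n}-{d}. Vf c a * esym ({1..n} - {c}) (?y - q) a))"
    by (subst sum.swap) (simp add: sum_distrib_left)
  also have "\<dots> = (\<Sum>q\<le>?y. (- a d)^q * (Pr (?y - q) a - Vf d a * esym ({1..n} - {d}) (?y - q) a))"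
    using d by (simp add: Pr_def sum.remove[of _ d] algebra_simps)
  also have "\<dots> = Ff (a(0 := a d))"
    unfolding Ff_def Pr_upd Yf_upd using d by (simp add: Ed_eq Vf_def)
  finally show ?thesis .
qed

lemma Ff_pol: "Ff \<in> Pol {0..n} (s - 1 + (i - 2))"
proof -
  have fin: "finite {0..n::nat}" by simp
  have sub: "J \<subseteq> {1..n} \<Longrightarrow> J \<subseteq> {0..n}" for J by auto
  have v0: "(\<lambda>b. - b 0) \<in> Pol {0..n} 1" using Pol_neg[OF Pol_var[OF fin, of 0 1]] by simp
  have Yp: "Yf \<in> Pol {0..n} (s - 1)" unfolding Yf_def[abs_def]
    by (rule Pol_sum[OF fin]) (auto intro!: Pol_esym[OF fin])
  have Vp: "Vf c \<in> Pol {0..n} (s - 1)" for c unfolding Vf_def[abs_def]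
    by (rule Pol_scale, rule Pol_diff[OF fin Yp], rule Pol_esym[OF fin]) auto
  have Pp: "Pr r \<in> Pol {0..n} (s - 1 + r)" for r unfolding Pr_def[abs_def]
  proof (rule Pol_sum[OF fin])
    fix c
    have "esym ({1..n} - {c}) r \<in> Pol {0..n} r" by (rule Pol_esym[OF fin]) auto
    thus "(\<lambda>b. Vf c b * esym ({1..n} - {c}) r b) \<in> Pol {0..n} (s - 1 + r)"
      by (rule Pol_mult[OF fin Vp])
  qed simp
  have Ep: "Ed m \<in> Pol {0..n} m" for m unfolding Ed_def[abs_def]
  proof (rule Pol_sum[OF fin])
    fix q assume q: "q \<in> {..m}"
    have "(\<lambda>b. (- b 0)^q * esym {1..n} (m - q) b) \<in> Pol {0..n} (q * 1 + (m - q))"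
      by (rule Pol_mult[OF fin Pol_pow[OF fin v0] Pol_esym[OF fin]]) auto
    thus "(\<lambda>b. (- b 0)^q * esym {1..n} (m - q) b) \<in> Pol {0..n} m" using q by simp
  qed simp
  have Vd: "(\<lambda>b. 4 * (Yf b - Ed (s - 1) b)) \<in> Pol {0..n} (s - 1)"
    by (rule Pol_scale, rule Pol_diff[OF fin Yp Ep])
  show ?thesis unfolding Ff_def[abs_def]
  proof (rule Pol_sum[OF fin])
    fix q assume q: "q \<in> {..i-2}"
    have br: "(\<lambda>b. Pr (i - 2 - q) b - 4 * (Yf b - Ed (s - 1) b) * Ed (i - 2 - q) b) \<in> Pol {0..n} (s - 1 + (i - 2 - q))"
      by (rule Pol_diff[OF fin Pp Pol_mult[OF fin Vd Ep]])
    have h: "(\<lambda>b. (- b 0)^q * (Pr (i - 2 - q) b - 4 * (Yf b - Ed (s - 1) b) * Ed (i - 2 - q) b)) \<in> Pol {0..n} (q * 1 + (s - 1 + (i - 2 - q)))"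
      by (rule Pol_mult[OF fin Pol_pow[OF fin v0] br])
    have eq: "q * 1 + (s - 1 + (i - 2 - q)) = s - 1 + (i - 2)" using q by auto
    show "(\<lambda>b. (- b 0)^q * (Pr (i - 2 - q) b - 4 * (Yf b - Ed (s - 1) b) * Ed (i - 2 - q) b)) \<in> Pol {0..n} (s - 1 + (i - 2))"
      using h unfolding eq .
  qed simp
qed

end



lemma monoI_upd0: "monoI {0..n} \<alpha> (a(0 := x)) = x ^ \<alpha> 0 * monoI {1..n} \<alpha> a"
proof -
  have e: "{0..n} = insert 0 {1..n}" by auto
  have "monoI {0..n} \<alpha> (a(0 := x)) = x ^ \<alpha> 0 * (\<Prod>j\<in>{1..n}. (a(0 := x)) j ^ \<alpha> j)"
    unfolding monoI_def e by (subst prod.insert) auto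
  also have "(\<Prod>j\<in>{1..n}. (a(0 := x)) j ^ \<alpha> j) = monoI {1..n} \<alpha> a"
    unfolding monoI_def by (intro prod.cong) auto
  finally show ?thesis .
qed

lemma sum_expo0: "\<alpha> \<in> expo {0..n} D \<Longrightarrow> \<alpha> 0 + sum \<alpha> {1..n} \<le> D"
proof -
  assume "\<alpha> \<in> expo {0..n} D"
  hence "sum \<alpha> {0..n} \<le> D" by (simp add: expo_def)
  moreover have "sum \<alpha> {0..n} = \<alpha> 0 + sum \<alpha> {1..n}"
    by (simp add: sum.atLeast_Suc_atMost[of 0 n] atLeastAtMost_iff)
  ultimately show ?thesis by simp
qed

lemma X_poly:
  assumes n: "n \<ge> 2" and s: "s \<in> {1..n}" and i: "i \<in> {1..n}" and k: "k \<in> {1..n}"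
  shows "\<exists>R \<in> Pol {1..n} (2*n - 3). \<forall>a. dist_on n a \<longrightarrow>
    (\<Sum>c\<in>{1..n}. Vm n a s c * (\<Sum>d\<in>{1..n}. Tt n a c d i * Bmat n a k d)) = R a"
proof (cases "2 \<le> i")
  case False
  have "(\<Sum>c\<in>{1..n}. Vm n a s c * (\<Sum>d\<in>{1..n}. Tt n a c d i * Bmat n a k d)) = 0" for a
    using False by (simp add: Tt_def)
  thus ?thesis using Pol_const[of "{1..n}" 0] by auto
next
  case True
  have fin: "finite {1..n::nat}" "finite {0..n::nat}" by auto
  define D where "D = s - 1 + (i - 2)"
  have D: "D \<le> 2*n - 3" using s i True unfolding D_def by auto
  obtain cF where cF: "\<And>b. Ff n s i b = (\<Sum>\<alpha>\<in>expo {0..n} D. cF \<alpha> * monoI {0..n} \<alpha> b)"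
    using Ff_pol[of n s i] unfolding D_def Pol_def by blast
  define DDP where "DDP m = (SOME P. P \<in> Pol {1..n} (m + 1 - n) \<and> (m + 1 < n \<longrightarrow> (\<forall>a. P a = 0)) \<and> (\<forall>a. dist_on n a \<longrightarrow> DDs n m a = P a))" for m
  have DDP: "DDP m \<in> Pol {1..n} (m + 1 - n) \<and> (\<forall>a. dist_on n a \<longrightarrow> DDs n m a = DDP m a)" for m
    using someI_ex[OF DD_pol[OF n, of m]] unfolding DDP_def by blast
  define R where "R a = (-1)^(k-1) * (\<Sum>\<alpha>\<in>expo {0..n} D. cF \<alpha> * (monoI {1..n} \<alpha> a * DDP (\<alpha> 0 + (n - k)) a))" for a
  have "R \<in> Pol {1..n} D" unfolding R_def[abs_def]
  proof (rule Pol_scale, rule Pol_sum[OF fin(1) finite_expo[OF fin(2)]])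
    fix \<alpha> assume \<alpha>: "\<alpha> \<in> expo {0..n} D"
    have "(\<lambda>a. monoI {1..n} \<alpha> a * DDP (\<alpha> 0 + (n - k)) a) \<in> Pol {1..n} (sum \<alpha> {1..n} + (\<alpha> 0 + (n - k) + 1 - n))"
      by (rule Pol_mult[OF fin(1) Pol_monoI[OF fin(1)]]) (use DDP in blast)
    moreover have "sum \<alpha> {1..n} + (\<alpha> 0 + (n - k) + 1 - n) \<le> D" using sum_expo0[OF \<alpha>] k by auto
    ultimately have "(\<lambda>a. monoI {1..n} \<alpha> a * DDP (\<alpha> 0 + (n - k)) a) \<in> Pol {1..n} D"
      by (rule Pol_mono[OF fin(1), rotated])
    thus "(\<lambda>a. cF \<alpha> * (monoI {1..n} \<alpha> a * DDP (\<alpha> 0 + (n - k)) a)) \<in> Pol {1..n} D" by (rule Pol_scale)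
  qed
  hence Rp: "R \<in> Pol {1..n} (2*n - 3)" by (rule Pol_mono[OF fin(1) D])
  have val: "(\<Sum>c\<in>{1..n}. Vm n a s c * (\<Sum>d\<in>{1..n}. Tt n a c d i * Bmat n a k d)) = R a" if a: "dist_on n a" for a
  proof -
    have "(\<Sum>c\<in>{1..n}. Vm n a s c * (\<Sum>d\<in>{1..n}. Tt n a c d i * Bmat n a k d))
        = (\<Sum>d\<in>{1..n}. Bmat n a k d * (\<Sum>c\<in>{1..n}. Vm n a s c * Tt n a c d i))"
      by (simp add: sum_distrib_left sum_distrib_right mult_ac) (rule sum.swap)
    also have "\<dots> = (\<Sum>d\<in>{1..n}. Bmat n a k d * Ff n s i (a(0 := a d)))"
    proof (intro sum.cong refl)
      fix d assume "d \<in> {1..n}"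
      thus "Bmat n a k d * (\<Sum>c\<in>{1..n}. Vm n a s c * Tt n a c d i) = Bmat n a k d * Ff n s i (a(0 := a d))"
        using W_eq[of d n i a s] True by simp
    qed
    also have "\<dots> = (\<Sum>d\<in>{1..n}. \<Sum>\<alpha>\<in>expo {0..n} D. (-1)^(k-1) * (cF \<alpha> * (monoI {1..n} \<alpha> a * (a d ^ (\<alpha> 0 + (n - k)) / (\<Prod>e\<in>{1..n}-{d}. a d - a e)))))"
      unfolding cF monoI_upd0 Bmat_def by (simp add: sum_distrib_left sum_distrib_right sum_divide_distrib power_add field_simps)
    also have "\<dots> = (-1)^(k-1) * (\<Sum>\<alpha>\<in>expo {0..n} D. cF \<alpha> * (monoI {1..n} \<alpha> a * DDs n (\<alpha> 0 + (n - k)) a))"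
      unfolding DDs_def by (subst sum.swap) (simp add: sum_distrib_left)
    also have "\<dots> = R a" unfolding R_def using DDP a by simp
    finally show ?thesis .
  qed
  show ?thesis using Rp val by blast
qed

lemma Pol_sq: assumes fin: "finite I" and R: "R \<in> Pol I D"
  shows "(\<lambda>p. R (\<lambda>j. p j ^ 2)) \<in> Pol I (2 * D)"
proof -
  obtain c where c: "\<And>a. R a = (\<Sum>\<alpha>\<in>expo I D. c \<alpha> * monoI I \<alpha> a)" using R unfolding Pol_def by blast
  have m: "monoI I \<alpha> (\<lambda>j. p j ^ 2) = monoI I (\<lambda>j. 2 * \<alpha> j) p" for \<alpha> p
    unfolding monoI_def by (intro prod.cong refl) (simp add: power_mult)
  have "(\<lambda>p. \<Sum>\<alpha>\<in>expo I D. c \<alpha> * monoI I (\<lambda>j. 2 * \<alpha> j) p) \<in> Pol I (2 * D)"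
  proof (rule Pol_sum[OF fin finite_expo[OF fin]])
    fix \<alpha> assume \<alpha>: "\<alpha> \<in> expo I D"
    have "monoI I (\<lambda>j. 2 * \<alpha> j) \<in> Pol I (sum (\<lambda>j. 2 * \<alpha> j) I)" by (rule Pol_monoI[OF fin])
    moreover have "sum (\<lambda>j. 2 * \<alpha> j) I \<le> 2 * D" using \<alpha> by (simp add: expo_def sum_distrib_left[symmetric])
    ultimately have "monoI I (\<lambda>j. 2 * \<alpha> j) \<in> Pol I (2 * D)" by (rule Pol_mono[OF fin, rotated])
    thus "(\<lambda>p. c \<alpha> * monoI I (\<lambda>j. 2 * \<alpha> j) p) \<in> Pol I (2 * D)" by (rule Pol_scale)
  qed
  thus ?thesis by (simp add: c m)
qed

theorem mainTheorem11:
  fixes n s i k :: nat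
  assumes "n \<ge> 2" and "s \<in> {1..n}" and "i \<in> {1..n}" and "k \<in> {1..n}"
  shows "\<exists>c :: (nat \<Rightarrow> nat) \<Rightarrow> complex. \<forall>p. generic n p \<longrightarrow>
           GamC n s i k (\<lambda>m. uC n m p) =
             (\<Sum>\<alpha>\<in>exps_below n (4*n - 4). c \<alpha> * (\<Prod>j=1..n. (p j) ^ \<alpha> j))"
proof -
  have fin: "finite {1..n::nat}" by simp
  obtain R where R: "R \<in> Pol {1..n} (2*n - 3)"
    and val: "\<And>a. dist_on n a \<Longrightarrow> (\<Sum>c\<in>{1..n}. Vm n a s c * (\<Sum>d\<in>{1..n}. Tt n a c d i * Bmat n a k d)) = R a"
    using X_poly[OF assms] by blast
  have "(\<lambda>p. R (\<lambda>j. p j ^ 2)) \<in> Pol {1..n} (2 * (2*n - 3))" by (rule Pol_sq[OF fin R])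
  moreover have "2 * (2*n - 3) \<le> 4*n - 5" using assms(1) by simp
  ultimately have "(\<lambda>p. R (\<lambda>j. p j ^ 2)) \<in> Pol {1..n} (4*n - 5)" by (rule Pol_mono[OF fin, rotated])
  then obtain c where c: "\<And>p. R (\<lambda>j. p j ^ 2) = (\<Sum>\<alpha>\<in>expo {1..n} (4*n - 5). c \<alpha> * monoI {1..n} \<alpha> p)"
    unfolding Pol_def by blast
  have ex: "expo {1..n} (4*n - 5) = exps_below n (4*n - 4)"
    using assms(1) unfolding expo_def exps_below_def by auto
  show ?thesis
  proof (intro exI allI impI)
    fix p assume g: "generic n p"
    define a where "a = (\<lambda>j. p j ^ 2)"
    have da: "dist_on n a" using g unfolding generic_def dist_on_def a_def by blast
    have za: "nzon n a" using g unfolding generic_def nzon_def a_def by simp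
    have u: "(\<lambda>m. uC n m p) m = esym {1..n} m a" for m by (simp add: uC_esym a_def)
    have "GamC n s i k (\<lambda>m. uC n m p) = (\<Sum>c\<in>{1..n}. Vm n a s c * (\<Sum>d\<in>{1..n}. Tt n a c d i * Bmat n a k d))"
      by (rule GamC_formula[OF assms(1) da za assms(2-4)]) (simp add: u)
    also have "\<dots> = R a" by (rule val[OF da])
    also have "\<dots> = (\<Sum>\<alpha>\<in>exps_below n (4*n - 4). c \<alpha> * (\<Prod>j=1..n. (p j) ^ \<alpha> j))"
      unfolding a_def c ex monoI_def ..
    finally show "GamC n s i k (\<lambda>m. uC n m p) = (\<Sum>\<alpha>\<in>exps_below n (4*n - 4). c \<alpha> * (\<Prod>j=1..n. (p j) ^ \<alpha> j))" .
  qed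
qed


end
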